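(* Let $\mathcal D\subseteq(0,1)$ be nonempty and $f:\mathcal D\to(0,1)$. The following are equivalent: (I) $f$ has a block simulation; (II) $f$ can be simulated by a finite automaton; (III) $f$ is the restriction to $\mathcal D$ of a rational function $F\in\mathbb Q(x)$ that is defined and satisfies $0<F(x)<1$ for all $x\in(0,1)$.
   Context: For $w\in\{0,1\}^*$ let $n_i(w)$ be the number of $i$'s in $w$; $\mathbf P_p[w]=p^{n_1(w)}(1-p)^{n_0(w)}$ and $\mathbf P_p[L]=\sum_{w\in L}\mathbf P_p[w]$. A simulation of $f:\mathcal D\to[0,1]$ is a pair of disjoint languages $L_0,L_1\subseteq\{0,1\}^*$ with $L_0\cup L_1$ prefix-free such that $\mathbf P_p[L_0\cup L_1]=1$ and $\mathbf P_p[L_1]=f(p)$ for all $p\in\mathcal D$. A finite automaton consists of finite state set $S$, start state $s_0$, transition function $\delta:S\times\{0,1\}\to S$ (extended to strings), and disjoint absorbing final-state sets $S_0,S_1$; $L_i$ is the set of strings $w$ with $\delta(s_0,w)\in S_i$ and $\delta(s_0,w')\notin S_0\cup S_1$ for every proper prefix $w'$ of $w$; the automaton simulates $f$ if $(L_0,L_1)$ is a simulation of $f$. A block simulation of $f$ is a simulation of the following form: for some $k\ge1$ and disjoint sets $A_0,A_1\subseteq\{0,1\}^k$, with $A'=\{0,1\}^k\setminus(A_0\cup A_1)$, one has $L_i=(A')^*A_i$, i.e. $L_i$ is the set of concatenations $u_1u_2\cdots u_mv$ with $m\ge0$, $u_j\in A'$, $v\in A_i$ (read $k$-bit blocks, output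 $i$ on a block in $A_i$, discard blocks in $A'$). *)

theory Defs
  imports "HOL-Analysis.Analysis" "HOL-Computational_Algebra.Polynomial"
begin

text \<open>Binary words are bool lists; True stands for the bit 1, False for the bit 0.\<close>

definition Pw :: "real \<Rightarrow> bool list \<Rightarrow> real" where
  "Pw p w = p ^ length (filter (\<lambda>b. b) w) * (1 - p) ^ length (filter (\<lambda>b. \<not> b) w)"

definition prefix_free :: "bool list set \<Rightarrow> bool" where
  "prefix_free L \<longleftrightarrow> (\<forall>u\<in>L. \<forall>v\<in>L. \<forall>z. v = u @ z \<longrightarrow> z = [])"

text \<open>P_p[L] = s is expressed as convergence of the (nonnegative) sum to s.\<close>
definition is_simulation ::
  "real set \<Rightarrow> (real \<Rightarrow> real) \<Rightarrow> bool list set \<Rightarrow> bool list set \<Rightarrow> bool" where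
  "is_simulation D f L0 L1 \<longleftrightarrow>
     L0 \<inter> L1 = {} \<and> prefix_free (L0 \<union> L1) \<and>
     (\<forall>p\<in>D. (Pw p has_sum 1) (L0 \<union> L1) \<and> (Pw p has_sum f p) L1)"

definition block_lang :: "bool list set \<Rightarrow> bool list set \<Rightarrow> bool list set" where
  "block_lang A' A = {concat us @ v | us v. set us \<subseteq> A' \<and> v \<in> A}"

definition has_block_simulation :: "real set \<Rightarrow> (real \<Rightarrow> real) \<Rightarrow> bool" where
  "has_block_simulation D f \<longleftrightarrow>
     (\<exists>k::nat. \<exists>A0 A1. k \<ge> 1 \<and> A0 \<subseteq> {w. length w = k} \<and> A1 \<subseteq> {w. length w = k}
        \<and> A0 \<inter> A1 = {} \<and>
        (let A' = {w. length w = k} - (A0 \<union> A1) in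
           is_simulation D f (block_lang A' A0) (block_lang A' A1)))"

definition dstar :: "(nat \<Rightarrow> bool \<Rightarrow> nat) \<Rightarrow> nat \<Rightarrow> bool list \<Rightarrow> nat" where
  "dstar \<delta> s w = foldl \<delta> s w"

definition aut_lang ::
  "(nat \<Rightarrow> bool \<Rightarrow> nat) \<Rightarrow> nat \<Rightarrow> nat set \<Rightarrow> nat set \<Rightarrow> nat set \<Rightarrow> bool list set" where
  "aut_lang \<delta> s0 S0 S1 Si = {w. dstar \<delta> s0 w \<in> Si \<and>
      (\<forall>w' z. w = w' @ z \<and> z \<noteq> [] \<longrightarrow> dstar \<delta> s0 w' \<notin> S0 \<union> S1)}"

definition is_automaton ::
  "nat set \<Rightarrow> nat \<Rightarrow> (nat \<Rightarrow> bool \<Rightarrow> nat) \<Rightarrow> nat set \<Rightarrow> nat set \<Rightarrow> bool" where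
  "is_automaton S s0 \<delta> S0 S1 \<longleftrightarrow> finite S \<and> s0 \<in> S \<and>
     (\<forall>s\<in>S. \<forall>b. \<delta> s b \<in> S) \<and> S0 \<subseteq> S \<and> S1 \<subseteq> S \<and> S0 \<inter> S1 = {} \<and>
     (\<forall>s\<in>S0. \<forall>b. \<delta> s b = s) \<and> (\<forall>s\<in>S1. \<forall>b. \<delta> s b = s)"

definition automaton_simulable :: "real set \<Rightarrow> (real \<Rightarrow> real) \<Rightarrow> bool" where
  "automaton_simulable D f \<longleftrightarrow>
     (\<exists>S s0 \<delta> S0 S1. is_automaton S s0 \<delta> S0 S1 \<and>
        is_simulation D f (aut_lang \<delta> s0 S0 S1 S0) (aut_lang \<delta> s0 S0 S1 S1))"

definition rational_simulable :: "real set \<Rightarrow> (real \<Rightarrow> real) \<Rightarrow> bool" where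
  "rational_simulable D f \<longleftrightarrow>
     (\<exists>P Q :: rat poly.
        (\<forall>x::real. 0 < x \<and> x < 1 \<longrightarrow>
           poly (map_poly of_rat Q) x \<noteq> 0 \<and>
           0 < poly (map_poly of_rat P) x / poly (map_poly of_rat Q) x \<and>
           poly (map_poly of_rat P) x / poly (map_poly of_rat Q) x < 1) \<and>
        (\<forall>p\<in>D. f p = poly (map_poly of_rat P) p / poly (map_poly of_rat Q) p))"

end

theory Submission
  imports Defs "Jordan_Normal_Form.Determinant" "HOL-Library.Countable"
begin


lemma Pw_Nil[simp]: "Pw p [] = 1"
  by (simp add: Pw_def)

lemma Pw_Cons[simp]: "Pw p (b#w) = (if b then p else 1-p) * Pw p w"
  by (simp add: Pw_def)

lemma Pw_append[simp]: "Pw p (u@v) = Pw p u * Pw p v"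
  by (induct u) auto

lemma Pw_nonneg: "0 \<le> p \<Longrightarrow> p \<le> 1 \<Longrightarrow> 0 \<le> Pw p w"
  by (simp add: Pw_def)

lemma Pw_pos: "0 < p \<Longrightarrow> p < 1 \<Longrightarrow> 0 < Pw p w"
  by (simp add: Pw_def)

lemma finite_words: "finite {w::bool list. length w = k}"
proof -
  have "finite {w::bool list. set w \<subseteq> UNIV \<and> length w = k}"
    by (rule finite_lists_length_eq) auto
  thus ?thesis by simp
qed

lemma words_Suc: "{w::bool list. length w = Suc k} =
   Cons True ` {w. length w = k} \<union> Cons False ` {w. length w = k}"
proof -
  have "w \<in> Cons True ` {w. length w = k} \<union> Cons False ` {w. length w = k}"
    if "length w = Suc k" for w :: "bool list"
    using that by (cases w) auto
  thus ?thesis by auto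
qed

lemma sum_words: "(\<Sum>w\<in>{w::bool list. length w = k}. Pw p w) = 1"
proof (induct k)
  case 0
  have "{w::bool list. length w = 0} = {[]}" by auto
  thus ?case by simp
next
  case (Suc k)
  have d: "Cons True ` {w. length w = k} \<inter> Cons False ` {w::bool list. length w = k} = {}" by auto
  have "(\<Sum>w\<in>{w::bool list. length w = Suc k}. Pw p w) =
    (\<Sum>w\<in>Cons True ` {w. length w = k}. Pw p w) + (\<Sum>w\<in>Cons False ` {w. length w = k}. Pw p w)"
    unfolding words_Suc by (rule sum.union_disjoint) (use d finite_words in auto)
  also have "\<dots> = p * (\<Sum>w\<in>{w. length w = k}. Pw p w) + (1-p) * (\<Sum>w\<in>{w. length w = k}. Pw p w)"
    by (simp add: sum.reindex sum_distrib_left)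
  finally show ?case using Suc by simp
qed

lemma prefix_free_subset: "prefix_free L \<Longrightarrow> M \<subseteq> L \<Longrightarrow> prefix_free M"
  unfolding prefix_free_def by blast

lemma kraft_aux:
  assumes "0 \<le> p" "p \<le> 1"
  shows "finite F \<Longrightarrow> prefix_free F \<Longrightarrow> (\<forall>w\<in>F. length w \<le> n) \<Longrightarrow> (\<Sum>w\<in>F. Pw p w) \<le> 1"
proof (induct n arbitrary: F)
  case 0
  hence "F \<subseteq> {[]}" by auto
  hence "F = {} \<or> F = {[]}" by auto
  thus ?case by auto
next
  case (Suc n)
  show ?case
  proof (cases "[] \<in> F")
    case True
    have "\<forall>w\<in>F. w = []"
      using Suc.prems(2) True unfolding prefix_free_def by (metis append.left_neutral)
    hence "F = {[]}" using True by blast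
    thus ?thesis by simp
  next
    case False
    define F1 where "F1 = {w. True # w \<in> F}"
    define F0 where "F0 = {w. False # w \<in> F}"
    have FF: "F = Cons True ` F1 \<union> Cons False ` F0"
    proof -
      have "w \<in> Cons True ` F1 \<union> Cons False ` F0" if wF: "w \<in> F" for w
      proof -
        obtain b v where w: "w = b # v" using wF False by (cases w) blast+
        show ?thesis
        proof (cases b)
          case True
          hence "v \<in> F1" using wF w by (simp add: F1_def)
          thus ?thesis using w True by blast
        next
          case False
          hence "v \<in> F0" using wF w by (simp add: F0_def)
          thus ?thesis using w False by blast
        qed
      qed
      thus ?thesis by (auto simp: F1_def F0_def)
    qed
    have fin1: "finite F1" unfolding F1_def
      by (rule finite_vimageI[of F "Cons True", unfolded vimage_def]) (use Suc.prems in auto)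
    have fin0: "finite F0" unfolding F0_def
      by (rule finite_vimageI[of F "Cons False", unfolded vimage_def]) (use Suc.prems in auto)
    have pf1: "prefix_free F1" unfolding prefix_free_def
    proof (intro ballI allI impI)
      fix u v z assume uv: "u \<in> F1" "v \<in> F1" "v = u @ z"
      hence "True#u \<in> F" "True#v \<in> F" "True#v = (True#u) @ z" by (auto simp: F1_def)
      thus "z = []" using Suc.prems(2) unfolding prefix_free_def by blast
    qed
    have pf0: "prefix_free F0" unfolding prefix_free_def
    proof (intro ballI allI impI)
      fix u v z assume uv: "u \<in> F0" "v \<in> F0" "v = u @ z"
      hence "False#u \<in> F" "False#v \<in> F" "False#v = (False#u) @ z" by (auto simp: F0_def)
      thus "z = []" using Suc.prems(2) unfolding prefix_free_def by blast
    qed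
    have s1: "(\<Sum>w\<in>F1. Pw p w) \<le> 1"
      by (rule Suc.hyps[OF fin1 pf1]) (use Suc.prems(3) in \<open>auto simp: F1_def\<close>)
    have s0: "(\<Sum>w\<in>F0. Pw p w) \<le> 1"
      by (rule Suc.hyps[OF fin0 pf0]) (use Suc.prems(3) in \<open>auto simp: F0_def\<close>)
    have "(\<Sum>w\<in>F. Pw p w) = (\<Sum>w\<in>Cons True ` F1. Pw p w) + (\<Sum>w\<in>Cons False ` F0. Pw p w)"
      unfolding FF by (rule sum.union_disjoint) (use fin1 fin0 in auto)
    also have "\<dots> = p * (\<Sum>w\<in>F1. Pw p w) + (1-p) * (\<Sum>w\<in>F0. Pw p w)"
      by (simp add: sum.reindex sum_distrib_left)
    also have "\<dots> \<le> p * 1 + (1-p) * 1"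
      by (intro add_mono mult_left_mono) (use s1 s0 assms in auto)
    finally show ?thesis by simp
  qed
qed

lemma kraft_finite:
  assumes "0 \<le> p" "p \<le> 1" "finite F" "prefix_free F"
  shows "(\<Sum>w\<in>F. Pw p w) \<le> 1"
proof -
  have "\<forall>w\<in>F. length w \<le> Max (length ` F)"
    using assms(3) by auto
  thus ?thesis using kraft_aux assms by blast
qed

lemma prefix_free_has_sum:
  assumes "0 \<le> p" "p \<le> 1" "prefix_free L"
  obtains s where "(Pw p has_sum s) L" "s \<le> 1" "0 \<le> s"
proof -
  have bdd: "bdd_above (sum (Pw p) ` {F. F \<subseteq> L \<and> finite F})"
    using kraft_finite[OF assms(1,2)] prefix_free_subset[OF assms(3)]
    by (intro bdd_aboveI[of _ 1]) blast
  have hs: "(Pw p has_sum (SUP F\<in>{F. finite F \<and> F \<subseteq> L}. sum (Pw p) F)) L"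
    by (rule nonneg_bdd_above_has_sum[OF _ bdd]) (use Pw_nonneg assms in auto)
  have le: "(SUP F\<in>{F. finite F \<and> F \<subseteq> L}. sum (Pw p) F) \<le> 1"
    by (rule has_sum_le_finite_sums[OF hs])
       (use kraft_finite[OF assms(1,2)] prefix_free_subset[OF assms(3)] in blast)
  have ge: "0 \<le> (SUP F\<in>{F. finite F \<and> F \<subseteq> L}. sum (Pw p) F)"
    by (rule has_sum_nonneg[OF hs]) (use Pw_nonneg assms in auto)
  show ?thesis using that hs le ge by blast
qed


lemma block_unique:
  assumes "set us \<subseteq> A'" "set us' \<subseteq> A'" "A' \<subseteq> {w. length w = k}"
    "length v = k" "length v' = k" "v \<notin> A'" "v' \<notin> A'"
    "concat us @ v @ z = concat us' @ v'"
  shows "us = us' \<and> v = v' \<and> z = []"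
  using assms
proof (induct us arbitrary: us')
  case Nil
  show ?case
  proof (cases us')
    case Nil
    hence e: "v @ z = v'" using Nil.prems(8) by simp
    hence "length v + length z = k" using Nil.prems(5) by (metis length_append)
    hence "z = []" using Nil.prems(4) by simp
    thus ?thesis using e Nil by simp
  next
    case (Cons u r)
    have "u \<in> A'" using Nil.prems Cons by auto
    hence "length u = k" using Nil.prems by auto
    hence "v = u" using Nil.prems(4,8) Cons by (simp add: append_eq_append_conv)
    thus ?thesis using \<open>u \<in> A'\<close> Nil.prems by auto
  qed
next
  case (Cons u us1)
  have uA: "u \<in> A'" "length u = k" using Cons.prems by auto
  show ?case
  proof (cases us')
    case Nil
    hence "u @ (concat us1 @ v @ z) = v' @ []" using Cons.prems(8) by simp
    hence "u = v'" using Cons.prems(5) uA append_eq_append_conv[of u v' "concat us1 @ v @ z" "[]"] by simp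
    thus ?thesis using uA Cons.prems by auto
  next
    case (Cons u' r)
    have u'A: "u' \<in> A'" "length u' = k" using Cons.prems Cons by auto
    have eq: "u @ (concat us1 @ v @ z) = u' @ (concat r @ v')"
      using Cons.prems(8) Cons by simp
    hence "u = u'" "concat us1 @ v @ z = concat r @ v'"
      using uA u'A by (simp_all add: append_eq_append_conv)
    moreover have "us1 = r \<and> v = v' \<and> z = []"
      by (rule Cons.hyps) (use Cons.prems Cons calculation in auto)
    ultimately show ?thesis using Cons by simp
  qed
qed

locale blocks =
  fixes k :: nat and A' :: "bool list set"
  assumes k: "k \<ge> 1" and A'k: "A' \<subseteq> {w. length w = k}"
begin

lemma block_lang_prefix_free:
  assumes "A \<subseteq> {w. length w = k}" "A \<inter> A' = {}"
  shows "prefix_free (block_lang A' A)"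
  unfolding prefix_free_def
proof (intro ballI allI impI)
  fix x y z assume "x \<in> block_lang A' A" "y \<in> block_lang A' A" "y = x @ z"
  then obtain us v us' v' where "x = concat us @ v" "set us \<subseteq> A'" "v \<in> A"
    "y = concat us' @ v'" "set us' \<subseteq> A'" "v' \<in> A"
    unfolding block_lang_def by blast
  moreover have "length v = k" "length v' = k" "v \<notin> A'" "v' \<notin> A'"
    using calculation assms by auto
  ultimately show "z = []" using block_unique[of us A' us' k v v' z] A'k \<open>y = x @ z\<close> by auto
qed

lemma block_lang_disjoint:
  assumes "A0 \<subseteq> {w. length w = k}" "A1 \<subseteq> {w. length w = k}" "A0 \<inter> A' = {}" "A1 \<inter> A' = {}"
    "A0 \<inter> A1 = {}"
  shows "block_lang A' A0 \<inter> block_lang A' A1 = {}"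
proof (rule ccontr)
  assume "block_lang A' A0 \<inter> block_lang A' A1 \<noteq> {}"
  then obtain us v us' v' where "concat us @ v = concat us' @ v'" "set us \<subseteq> A'" "v \<in> A0"
    "set us' \<subseteq> A'" "v' \<in> A1"
    unfolding block_lang_def by blast
  moreover have "length v = k" "length v' = k" "v \<notin> A'" "v' \<notin> A'"
    using calculation assms by auto
  ultimately have "v = v'" using block_unique[of us A' us' k v v' "[]"] A'k by auto
  thus False using \<open>v \<in> A0\<close> \<open>v' \<in> A1\<close> assms by auto
qed

lemma block_lang_Un: "block_lang A' A0 \<union> block_lang A' A1 = block_lang A' (A0 \<union> A1)"
  unfolding block_lang_def by blast

lemma block_lang_decomp:
  "block_lang A' A = A \<union> (\<Union>u\<in>A'. (@) u ` block_lang A' A)"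
proof
  show "block_lang A' A \<subseteq> A \<union> (\<Union>u\<in>A'. (@) u ` block_lang A' A)"
  proof
    fix x assume "x \<in> block_lang A' A"
    then obtain us v where x: "x = concat us @ v" "set us \<subseteq> A'" "v \<in> A"
      unfolding block_lang_def by blast
    show "x \<in> A \<union> (\<Union>u\<in>A'. (@) u ` block_lang A' A)"
    proof (cases us)
      case Nil thus ?thesis using x by simp
    next
      case (Cons u r)
      have "concat r @ v \<in> block_lang A' A" using x Cons unfolding block_lang_def by auto
      moreover have "x = u @ (concat r @ v)" using x Cons by simp
      ultimately show ?thesis using x Cons by auto
    qed
  qed
next
  show "A \<union> (\<Union>u\<in>A'. (@) u ` block_lang A' A) \<subseteq> block_lang A' A"
  proof
    fix x assume "x \<in> A \<union> (\<Union>u\<in>A'. (@) u ` block_lang A' A)"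
    thus "x \<in> block_lang A' A"
    proof
      assume "x \<in> A"
      thus ?thesis unfolding block_lang_def by (intro CollectI exI[of _ "[]"] exI[of _ x]) auto
    next
      assume "x \<in> (\<Union>u\<in>A'. (@) u ` block_lang A' A)"
      then obtain u us v where "u \<in> A'" "x = u @ (concat us @ v)" "set us \<subseteq> A'" "v \<in> A"
        unfolding block_lang_def by blast
      thus ?thesis unfolding block_lang_def by (intro CollectI exI[of _ "u#us"] exI[of _ v]) auto
    qed
  qed
qed

end

lemma has_sum_UN_finite:
  fixes f :: "'a \<Rightarrow> real"
  assumes "finite I" "\<And>i. i \<in> I \<Longrightarrow> (f has_sum g i) (B i)"
    "\<And>i j. i \<in> I \<Longrightarrow> j \<in> I \<Longrightarrow> i \<noteq> j \<Longrightarrow> B i \<inter> B j = {}"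
  shows "(f has_sum (\<Sum>i\<in>I. g i)) (\<Union>i\<in>I. B i)"
  using assms
proof (induct I rule: finite_induct)
  case empty thus ?case by simp
next
  case (insert i I)
  have "(f has_sum (g i + (\<Sum>i\<in>I. g i))) (B i \<union> (\<Union>i\<in>I. B i))"
    by (rule has_sum_Un_disjoint) (use insert in auto)
  thus ?case using insert by simp
qed


lemma finite_len_subset: "A \<subseteq> {w::bool list. length w = k} \<Longrightarrow> finite A"
  using finite_words finite_subset by blast

lemma has_sum_append_image:
  assumes "(Pw p has_sum s) L"
  shows "(Pw p has_sum (Pw p u * s)) ((@) u ` L)"
proof -
  have "inj_on ((@) u) L" by (auto simp: inj_on_def)
  moreover have "(Pw p \<circ> (@) u) = (\<lambda>w. Pw p u * Pw p w)" by (auto simp: fun_eq_iff)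
  ultimately show ?thesis using has_sum_reindex has_sum_cmult_right[OF assms] by metis
qed

context blocks begin

lemma block_lang_len: "x \<in> block_lang A' A \<Longrightarrow> A \<subseteq> {w. length w = k} \<Longrightarrow> length x \<ge> k"
  unfolding block_lang_def by auto

lemma block_has_sum:
  assumes A: "A \<subseteq> {w. length w = k}" "A \<inter> A' = {}" and p: "0 < p" "p < 1"
  shows "(Pw p has_sum ((\<Sum>w\<in>A. Pw p w) / (1 - (\<Sum>w\<in>A'. Pw p w)))) (block_lang A' A)"
proof (cases "A = {}")
  case True
  hence "block_lang A' A = {}" unfolding block_lang_def by auto
  thus ?thesis using True by simp
next
  case False
  define L where "L = block_lang A' A"
  define a where "a = (\<Sum>w\<in>A. Pw p w)"
  define a' where "a' = (\<Sum>w\<in>A'. Pw p w)"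
  obtain s where hs: "(Pw p has_sum s) L"
    using prefix_free_has_sum[of p L] block_lang_prefix_free[OF A] p unfolding L_def by force
  have finA: "finite A" "finite A'" using A A'k finite_len_subset by auto
  have U: "(Pw p has_sum (\<Sum>u\<in>A'. Pw p u * s)) (\<Union>u\<in>A'. (@) u ` L)"
  proof (rule has_sum_UN_finite[OF finA(2)])
    show "(Pw p has_sum (Pw p u * s)) ((@) u ` L)" for u using has_sum_append_image[OF hs] .
    show "(@) u ` L \<inter> (@) u' ` L = {}" if "u \<in> A'" "u' \<in> A'" "u \<noteq> u'" for u u'
    proof -
      have "length u = length u'" using that A'k by auto
      thus ?thesis using that by (auto simp: append_eq_append_conv)
    qed
  qed
  have hA: "(Pw p has_sum a) A" unfolding a_def using finA by (simp add: has_sum_finiteI)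
  have disj: "A \<inter> (\<Union>u\<in>A'. (@) u ` L) = {}"
  proof -
    { fix x u y assume "x \<in> A" "u \<in> A'" "y \<in> L" "x = u @ y"
      hence "length x = k" "length u = k" "length y \<ge> k" using A A'k block_lang_len unfolding L_def by auto
      hence False using \<open>x = u @ y\<close> k by simp }
    thus ?thesis by blast
  qed
  have "(Pw p has_sum (a + (\<Sum>u\<in>A'. Pw p u * s))) (A \<union> (\<Union>u\<in>A'. (@) u ` L))"
    by (rule has_sum_Un_disjoint[OF hA U disj])
  hence "(Pw p has_sum (a + a' * s)) L"
    unfolding L_def a'_def sum_distrib_right by (subst block_lang_decomp) simp
  hence eq: "s = a + a' * s" using hs has_sum_unique by blast
  have "a + a' = (\<Sum>w\<in>A \<union> A'. Pw p w)" unfolding a_def a'_def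
    by (rule sum.union_disjoint[symmetric]) (use finA A in auto)
  also have "\<dots> \<le> (\<Sum>w\<in>{w. length w = k}. Pw p w)"
    by (rule sum_mono2[OF finite_words]) (use A A'k Pw_nonneg p in auto)
  finally have le: "a + a' \<le> 1" by (simp add: sum_words)
  have "a > 0" unfolding a_def using False finA Pw_pos p by (intro sum_pos) auto
  hence "a' < 1" using le by simp
  hence "s = a / (1 - a')" using eq by (simp add: field_simps)
  thus ?thesis using hs unfolding L_def a_def a'_def by simp
qed

end


definition Wk :: "nat \<Rightarrow> nat \<Rightarrow> bool list set" where
  "Wk k i = {w. length w = k \<and> length (filter (\<lambda>b. b) w) = i}"

lemma Wk_sub: "Wk k i \<subseteq> {w. length w = k}"
  by (auto simp: Wk_def)

lemma finite_Wk: "finite (Wk k i)"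
  using finite_len_subset[OF Wk_sub] .

lemma Pw_Wk: "w \<in> Wk k i \<Longrightarrow> Pw p w = p ^ i * (1 - p) ^ (k - i)"
proof -
  assume "w \<in> Wk k i"
  hence "length w = k" "length (filter (\<lambda>b. b) w) = i" by (auto simp: Wk_def)
  moreover have "length (filter (\<lambda>b. b) w) + length (filter (\<lambda>b. \<not> b) w) = length w"
    by (rule sum_length_filter_compl)
  ultimately have "length (filter (\<lambda>b. \<not> b) w) = k - i" by linarith
  thus ?thesis using \<open>length (filter (\<lambda>b. b) w) = i\<close> by (simp add: Pw_def)
qed

lemma card_Wk: "k choose i \<le> card (Wk k i)"
proof -
  define g where "g X = map (\<lambda>l. l \<in> X) [0..<k]" for X :: "nat set"
  have "inj_on g {X. X \<subseteq> {0..<k} \<and> card X = i}"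
  proof (rule inj_onI)
    fix X Y assume X: "X \<in> {X. X \<subseteq> {0..<k} \<and> card X = i}" and Y: "Y \<in> {X. X \<subseteq> {0..<k} \<and> card X = i}"
      and e: "g X = g Y"
    have "(l \<in> X) = (l \<in> Y)" if "l < k" for l
      using arg_cong[OF e, of "\<lambda>xs. xs ! l"] that by (simp add: g_def)
    thus "X = Y" using X Y by auto
  qed
  moreover have "g ` {X. X \<subseteq> {0..<k} \<and> card X = i} \<subseteq> Wk k i"
  proof
    fix w assume "w \<in> g ` {X. X \<subseteq> {0..<k} \<and> card X = i}"
    then obtain X where X: "X \<subseteq> {0..<k}" "card X = i" "w = g X" by auto
    have "length (filter (\<lambda>b. b) w) = length (filter (\<lambda>l. l \<in> X) [0..<k])"
      unfolding X g_def by (simp add: filter_map o_def)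
    also have "\<dots> = card (set (filter (\<lambda>l. l \<in> X) [0..<k]))"
      by (rule distinct_card[symmetric]) simp
    also have "set (filter (\<lambda>l. l \<in> X) [0..<k]) = X" using X by auto
    finally show "w \<in> Wk k i" using X by (simp add: Wk_def g_def)
  qed
  ultimately have "card {X. X \<subseteq> {0..<k} \<and> card X = i} \<le> card (Wk k i)"
    using card_inj_on_le finite_Wk by blast
  moreover have "card {X. X \<subseteq> {0..<k} \<and> card X = i} = k choose i"
    using n_subsets[of "{0..<k}" i] by simp
  ultimately show ?thesis by simp
qed

lemma Wk_disj: "i \<noteq> j \<Longrightarrow> Wk k i \<inter> Wk k j = {}"
  by (auto simp: Wk_def)

lemma choose_sets:
  assumes "\<And>i. i \<le> k \<Longrightarrow> \<alpha> i + \<beta> i \<le> k choose i"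
  obtains A0 A1 where "A0 \<subseteq> {w. length w = k}" "A1 \<subseteq> {w. length w = k}" "A0 \<inter> A1 = {}"
    "\<And>p. (\<Sum>w\<in>A1. Pw p w) = (\<Sum>i\<le>k. real (\<alpha> i) * (p ^ i * (1 - p) ^ (k - i)))"
    "\<And>p. (\<Sum>w\<in>A0. Pw p w) = (\<Sum>i\<le>k. real (\<beta> i) * (p ^ i * (1 - p) ^ (k - i)))"
proof -
  have "\<forall>i\<in>{..k}. \<exists>XY. fst XY \<subseteq> Wk k i \<and> snd XY \<subseteq> Wk k i \<and> fst XY \<inter> snd XY = {}
          \<and> card (fst XY) = \<alpha> i \<and> card (snd XY) = \<beta> i"
  proof
    fix i assume "i \<in> {..k}"
    hence "\<alpha> i + \<beta> i \<le> card (Wk k i)" using assms card_Wk[of k i] by fastforce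
    then obtain T where T: "T \<subseteq> Wk k i" "card T = \<alpha> i + \<beta> i" "finite T"
      by (rule obtain_subset_with_card_n)
    obtain X where X: "X \<subseteq> T" "card X = \<alpha> i" "finite X"
      using obtain_subset_with_card_n[of "\<alpha> i" T] T by auto
    have "card (T - X) = \<beta> i" using X T by (simp add: card_Diff_subset)
    thus "\<exists>XY. fst XY \<subseteq> Wk k i \<and> snd XY \<subseteq> Wk k i \<and> fst XY \<inter> snd XY = {}
          \<and> card (fst XY) = \<alpha> i \<and> card (snd XY) = \<beta> i"
      using X T by (intro exI[of _ "(X, T - X)"]) auto
  qed
  then obtain XY where XY: "\<And>i. i \<in> {..k} \<Longrightarrow> fst (XY i) \<subseteq> Wk k i \<and> snd (XY i) \<subseteq> Wk k i \<and>
     fst (XY i) \<inter> snd (XY i) = {} \<and> card (fst (XY i)) = \<alpha> i \<and> card (snd (XY i)) = \<beta> i"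
    using bchoice[of "{..k}"] by metis
  define X where "X i = fst (XY i)" for i
  define Y where "Y i = snd (XY i)" for i
  have XY': "X i \<subseteq> Wk k i" "Y i \<subseteq> Wk k i" "X i \<inter> Y i = {}" "card (X i) = \<alpha> i" "card (Y i) = \<beta> i"
    if "i \<le> k" for i using XY[of i] that by (auto simp: X_def Y_def)
  have finX: "finite (X i)" "finite (Y i)" if "i \<le> k" for i
    using finite_subset[OF XY'(1)[OF that] finite_Wk] finite_subset[OF XY'(2)[OF that] finite_Wk] by auto
  define A1 where "A1 = (\<Union>i\<in>{..k}. X i)"
  define A0 where "A0 = (\<Union>i\<in>{..k}. Y i)"
  have "X i \<subseteq> {w. length w = k}" "Y i \<subseteq> {w. length w = k}" if "i \<le> k" for i
    using XY'(1,2)[OF that] Wk_sub[of k i] by blast+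
  hence s1: "A1 \<subseteq> {w. length w = k}" "A0 \<subseteq> {w. length w = k}"
    unfolding A1_def A0_def by auto
  have d: "A0 \<inter> A1 = {}"
  proof -
    { fix w i j assume "i \<le> k" "j \<le> k" "w \<in> Y i" "w \<in> X j"
      hence "w \<in> Wk k i" "w \<in> Wk k j" using XY' by auto
      hence "i = j" using Wk_disj by blast
      hence False using XY' \<open>w \<in> Y i\<close> \<open>w \<in> X j\<close> \<open>j \<le> k\<close> by blast }
    thus ?thesis unfolding A0_def A1_def by blast
  qed
  have sumU: "(\<Sum>w\<in>(\<Union>i\<in>{..k}. Z i). Pw p w) = (\<Sum>i\<le>k. real (card (Z i)) * (p ^ i * (1 - p) ^ (k - i)))"
    if "\<And>i. i \<le> k \<Longrightarrow> Z i \<subseteq> Wk k i" for Z p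
  proof -
    have fin: "finite (Z i)" if "i \<le> k" for i using \<open>\<And>i. i \<le> k \<Longrightarrow> Z i \<subseteq> Wk k i\<close>[OF that] finite_Wk finite_subset by blast
    have "(\<Sum>w\<in>(\<Union>i\<in>{..k}. Z i). Pw p w) = (\<Sum>i\<le>k. (\<Sum>w\<in>Z i. Pw p w))"
    proof (rule sum.UNION_disjoint)
      show "\<forall>i\<in>{..k}. \<forall>j\<in>{..k}. i \<noteq> j \<longrightarrow> Z i \<inter> Z j = {}"
      proof (intro ballI impI)
        fix i j assume "i \<in> {..k}" "j \<in> {..k}" "i \<noteq> j"
        thus "Z i \<inter> Z j = {}" using that[of i] that[of j] Wk_disj[of i j k] by auto
      qed
    qed (use fin in auto)
    also have "\<dots> = (\<Sum>i\<le>k. real (card (Z i)) * (p ^ i * (1 - p) ^ (k - i)))"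
    proof (rule sum.cong[OF refl])
      fix i assume "i \<in> {..k}"
      hence "(\<Sum>w\<in>Z i. Pw p w) = (\<Sum>w\<in>Z i. p ^ i * (1 - p) ^ (k - i))"
      proof (intro sum.cong refl)
        fix w assume "w \<in> Z i"
        hence "w \<in> Wk k i" using that \<open>i \<in> {..k}\<close> by auto
        thus "Pw p w = p ^ i * (1 - p) ^ (k - i)" by (rule Pw_Wk)
      qed
      thus "(\<Sum>w\<in>Z i. Pw p w) = real (card (Z i)) * (p ^ i * (1 - p) ^ (k - i))" by simp
    qed
    finally show ?thesis .
  qed
  show ?thesis
  proof (rule that[OF s1(2) s1(1) d])
    fix p
    show "(\<Sum>w\<in>A1. Pw p w) = (\<Sum>i\<le>k. real (\<alpha> i) * (p ^ i * (1 - p) ^ (k - i)))"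
      unfolding A1_def using XY' by (subst sumU) auto
    show "(\<Sum>w\<in>A0. Pw p w) = (\<Sum>i\<le>k. real (\<beta> i) * (p ^ i * (1 - p) ^ (k - i)))"
      unfolding A0_def using XY' by (subst sumU) auto
  qed
qed


lemma coeffs_block_sim:
  fixes \<alpha> \<beta> :: "nat \<Rightarrow> nat"
  assumes k: "k \<ge> 1" and bnd: "\<And>i. i \<le> k \<Longrightarrow> \<alpha> i + \<beta> i \<le> k choose i"
    and nz: "\<exists>i\<le>k. \<alpha> i + \<beta> i > 0" and D: "D \<subseteq> {0<..<1}"
    and fD: "\<And>p. p \<in> D \<Longrightarrow> f p = (\<Sum>i\<le>k. real (\<alpha> i) * (p ^ i * (1 - p) ^ (k - i))) /
        (\<Sum>i\<le>k. real (\<alpha> i + \<beta> i) * (p ^ i * (1 - p) ^ (k - i)))"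
  shows "has_block_simulation D f"
proof -
  obtain A0 A1 where A: "A0 \<subseteq> {w. length w = k}" "A1 \<subseteq> {w. length w = k}" "A0 \<inter> A1 = {}"
    and s1: "\<And>p. (\<Sum>w\<in>A1. Pw p w) = (\<Sum>i\<le>k. real (\<alpha> i) * (p ^ i * (1 - p) ^ (k - i)))"
    and s0: "\<And>p. (\<Sum>w\<in>A0. Pw p w) = (\<Sum>i\<le>k. real (\<beta> i) * (p ^ i * (1 - p) ^ (k - i)))"
    using choose_sets[of k \<alpha> \<beta>, OF bnd] by blast
  define A' where "A' = {w. length w = k} - (A0 \<union> A1)"
  interpret blocks k A' using k by unfold_locales (auto simp: A'_def)
  have finA: "finite A0" "finite A1" "finite A'" using A finite_len_subset A'_def finite_words by auto
  have sim: "is_simulation D f (block_lang A' A0) (block_lang A' A1)"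
    unfolding is_simulation_def
  proof (intro conjI ballI)
    show "block_lang A' A0 \<inter> block_lang A' A1 = {}"
      by (rule block_lang_disjoint) (use A in \<open>auto simp: A'_def\<close>)
    show "prefix_free (block_lang A' A0 \<union> block_lang A' A1)"
      unfolding block_lang_Un by (rule block_lang_prefix_free) (use A in \<open>auto simp: A'_def\<close>)
    fix p assume "p \<in> D"
    hence p: "0 < p" "p < 1" using D by auto
    define a0 a1 a' where "a0 = (\<Sum>w\<in>A0. Pw p w)" and "a1 = (\<Sum>w\<in>A1. Pw p w)"
      and "a' = (\<Sum>w\<in>A'. Pw p w)"
    have "{w. length w = k} = (A0 \<union> A1) \<union> A'" using A unfolding A'_def by auto
    hence "1 = (\<Sum>w\<in>(A0 \<union> A1) \<union> A'. Pw p w)" using sum_words[of p k] by simp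
    also have "\<dots> = (\<Sum>w\<in>A0 \<union> A1. Pw p w) + a'" unfolding a'_def
      by (rule sum.union_disjoint) (use finA in \<open>auto simp: A'_def\<close>)
    also have "(\<Sum>w\<in>A0 \<union> A1. Pw p w) = a0 + a1" unfolding a0_def a1_def
      by (rule sum.union_disjoint) (use finA A in auto)
    finally have tot0: "1 = a0 + a1 + a'" .
    have u01: "(\<Sum>w\<in>A0 \<union> A1. Pw p w) = a0 + a1" unfolding a0_def a1_def
      by (rule sum.union_disjoint) (use finA A in auto)
    from tot0 have tot: "1 - a' = a0 + a1" by simp
    have "a0 + a1 = (\<Sum>i\<le>k. real (\<alpha> i + \<beta> i) * (p ^ i * (1 - p) ^ (k - i)))"
      unfolding a0_def a1_def s0 s1
      by (subst sum.distrib[symmetric], rule sum.cong, simp, simp add: distrib_right)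
    moreover have "(\<Sum>i\<le>k. real (\<alpha> i + \<beta> i) * (p ^ i * (1 - p) ^ (k - i))) > 0"
    proof -
      obtain i where i: "i \<le> k" "\<alpha> i + \<beta> i > 0" using nz by auto
      have "0 < real (\<alpha> i + \<beta> i) * (p ^ i * (1 - p) ^ (k - i))" using i p by (intro mult_pos_pos) auto
      also have "\<dots> \<le> (\<Sum>i\<le>k. real (\<alpha> i + \<beta> i) * (p ^ i * (1 - p) ^ (k - i)))"
        by (rule member_le_sum) (use i p in auto)
      finally show ?thesis .
    qed
    ultimately have pos: "a0 + a1 > 0" by simp
    have "(Pw p has_sum ((\<Sum>w\<in>A0 \<union> A1. Pw p w) / (1 - a'))) (block_lang A' (A0 \<union> A1))"
      unfolding a'_def by (rule block_has_sum) (use A p in \<open>auto simp: A'_def\<close>)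
    hence "(Pw p has_sum ((a0 + a1) / (1 - a'))) (block_lang A' (A0 \<union> A1))" unfolding u01 .
    thus "(Pw p has_sum 1) (block_lang A' A0 \<union> block_lang A' A1)"
      unfolding block_lang_Un tot using pos by simp
    have "(Pw p has_sum (a1 / (1 - a'))) (block_lang A' A1)"
      using block_has_sum[of "A1" p] A p unfolding a'_def A'_def a1_def by auto
    moreover have "a1 / (1 - a') = f p"
      unfolding tot fD[OF \<open>p \<in> D\<close>] \<open>a0 + a1 = _\<close>[symmetric] a1_def s1 ..
    ultimately show "(Pw p has_sum f p) (block_lang A' A1)" by simp
  qed
  show ?thesis unfolding has_block_simulation_def Let_def
    by (intro exI[of _ k] exI[of _ A0] exI[of _ A1]) (use k A sim in \<open>simp add: A'_def\<close>)
qed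


definition bc :: "'a::comm_ring_1 poly \<Rightarrow> nat \<Rightarrow> nat \<Rightarrow> 'a" where
  "bc g n i = (\<Sum>j\<le>i. coeff g j * of_nat ((n - j) choose (i - j)))"

lemma poly_as_sum_n:
  fixes g :: "'a::comm_ring_1 poly"
  assumes "degree g \<le> n"
  shows "poly g x = (\<Sum>j\<le>n. coeff g j * x ^ j)"
proof -
  have "(\<Sum>j\<le>n. coeff g j * x ^ j) = (\<Sum>j\<le>degree g. coeff g j * x ^ j)"
    by (rule sum.mono_neutral_right) (use assms in \<open>auto simp: coeff_eq_0\<close>)
  thus ?thesis by (simp add: poly_altdef)
qed

lemma bern_expand:
  fixes g :: "'a::comm_ring_1 poly"
  assumes "degree g \<le> n"
  shows "poly g x = (\<Sum>i\<le>n. bc g n i * (x ^ i * (1 - x) ^ (n - i)))"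
proof -
  define F where "F j i = coeff g j * of_nat ((n - j) choose (i - j)) * (x ^ i * (1 - x) ^ (n - i))" for j i
  have inner: "coeff g j * x ^ j = (\<Sum>i\<in>{j..n}. F j i)" if "j \<le> n" for j
  proof -
    have "coeff g j * x ^ j = coeff g j * x ^ j * (x + (1 - x)) ^ (n - j)" by simp
    also have "(x + (1 - x)) ^ (n - j) = (\<Sum>l\<le>n-j. of_nat ((n - j) choose l) * x ^ l * (1 - x) ^ (n - j - l))"
      by (rule binomial_ring)
    also have "coeff g j * x ^ j * (\<Sum>l\<le>n-j. of_nat ((n - j) choose l) * x ^ l * (1 - x) ^ (n - j - l)) =
       (\<Sum>l\<le>n-j. coeff g j * x ^ j * (of_nat ((n - j) choose l) * x ^ l * (1 - x) ^ (n - j - l)))"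
      by (rule sum_distrib_left)
    also have "\<dots> = (\<Sum>l\<le>n-j. F j (j + l))"
    proof (rule sum.cong[OF refl])
      fix l assume "l \<in> {..n-j}"
      hence "n - j - l = n - (j + l)" by simp
      thus "coeff g j * x ^ j * (of_nat ((n - j) choose l) * x ^ l * (1 - x) ^ (n - j - l)) = F j (j + l)"
        by (simp add: F_def power_add algebra_simps)
    qed
    also have "\<dots> = (\<Sum>i\<in>(\<lambda>l. j + l) ` {..n-j}. F j i)"
      by (rule sum.reindex[symmetric, unfolded o_def]) (auto simp: inj_on_def)
    also have "(\<lambda>l. j + l) ` {..n-j} = {j..n}"
    proof
      show "{j..n} \<subseteq> (\<lambda>l. j + l) ` {..n-j}"
      proof
        fix i assume "i \<in> {j..n}"
        hence "i = j + (i - j)" "i - j \<in> {..n-j}" by auto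
        thus "i \<in> (\<lambda>l. j + l) ` {..n-j}" by blast
      qed
    qed (use that in auto)
    finally show ?thesis .
  qed
  have "poly g x = (\<Sum>j\<le>n. coeff g j * x ^ j)" by (rule poly_as_sum_n[OF assms])
  also have "\<dots> = (\<Sum>j\<le>n. \<Sum>i\<in>{i. i \<in> {..n} \<and> j \<le> i}. F j i)"
  proof (rule sum.cong[OF refl])
    fix j assume "j \<in> {..n}"
    moreover have "{i. i \<in> {..n} \<and> j \<le> i} = {j..n}" by auto
    ultimately show "coeff g j * x ^ j = (\<Sum>i\<in>{i. i \<in> {..n} \<and> j \<le> i}. F j i)" using inner by simp
  qed
  also have "\<dots> = (\<Sum>i\<le>n. \<Sum>j\<in>{j. j \<in> {..n} \<and> j \<le> i}. F j i)"
    by (rule sum.swap_restrict) auto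
  also have "\<dots> = (\<Sum>i\<le>n. bc g n i * (x ^ i * (1 - x) ^ (n - i)))"
  proof (rule sum.cong[OF refl])
    fix i assume "i \<in> {..n}"
    hence "{j. j \<in> {..n} \<and> j \<le> i} = {..i}" by auto
    thus "(\<Sum>j\<in>{j. j \<in> {..n} \<and> j \<le> i}. F j i) = bc g n i * (x ^ i * (1 - x) ^ (n - i))"
      by (simp add: F_def bc_def sum_distrib_right)
  qed
  finally show ?thesis .
qed

lemma prod_diff_bound:
  fixes a c u t :: real
  assumes "0 \<le> u" "u \<le> 1" "0 \<le> c" "c \<le> 1"
  shows "\<bar>a * u - c * t\<bar> \<le> \<bar>a - c\<bar> + \<bar>u - t\<bar>"
proof -
  have "a * u - c * t = (a - c) * u + c * (u - t)" by (simp add: algebra_simps)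
  hence "\<bar>a * u - c * t\<bar> \<le> \<bar>a - c\<bar> * u + c * \<bar>u - t\<bar>"
    using assms by (simp add: abs_mult abs_triangle_ineq[THEN order_trans])
  also have "\<dots> \<le> \<bar>a - c\<bar> * 1 + 1 * \<bar>u - t\<bar>"
    by (intro add_mono mult_mono) (use assms in auto)
  finally show ?thesis by simp
qed

lemma aux_div:
  fixes r X s Y C :: real
  assumes "r * X = s * Y" "s \<noteq> 0"
  shows "Y / C = X / C * (r / s)"
proof -
  have "Y = r * X / s" using assms by (simp add: field_simps)
  thus ?thesis by (simp add: mult.commute)
qed

lemma beta_bound:
  assumes "j \<le> i" "i \<le> n" "0 < n"
  shows "\<bar>real ((n - j) choose (i - j)) / real (n choose i) - (real i / real n) ^ j\<bar> \<le> real j ^ 2 / real n"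
  using assms(1)
proof (induct j)
  case 0
  have "real (n choose i) > 0" using assms by simp
  thus ?case by simp
next
  case (Suc j)
  define t where "t = real i / real n"
  define u where "u = real (i - j) / real (n - j)"
  define b where "b = real ((n - j) choose (i - j)) / real (n choose i)"
  have ji: "j < i" "j < n" using Suc assms by auto
  have cn: "real (n choose i) > 0" using assms by simp
  obtain a where a: "n - j = Suc a" using ji by (metis Suc_diff_Suc)
  obtain c where c: "i - j = Suc c" using ji by (metis Suc_diff_Suc)
  have "Suc c * (Suc a choose Suc c) = Suc a * (a choose c)" by (rule Suc_times_binomial)
  hence "real (i - j) * real ((n - j) choose (i - j)) = real (n - j) * real ((n - Suc j) choose (i - Suc j))"
    using a c by (metis Suc_diff_Suc ji diff_Suc_Suc of_nat_mult old.nat.inject)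
  moreover have "real (n - j) \<noteq> 0" using ji by simp
  ultimately have b1: "real ((n - Suc j) choose (i - Suc j)) / real (n choose i) = b * u"
    unfolding b_def u_def by (rule aux_div)
  have IH: "\<bar>b - t ^ j\<bar> \<le> real j ^ 2 / real n" using Suc unfolding b_def t_def by simp
  have u01: "0 \<le> u" "u \<le> 1" using ji assms unfolding u_def by auto
  have t01: "0 \<le> t" "t \<le> 1" using assms unfolding t_def by auto
  have "u \<le> t"
  proof -
    have "real (i - j) * real n \<le> real i * real (n - j)"
    proof -
      have "real (i - j) * real n = real i * real n - real j * real n" using ji by (simp add: of_nat_diff algebra_simps)
      moreover have "real i * real (n - j) = real i * real n - real i * real j" using ji by (simp add: of_nat_diff algebra_simps)
      moreover have "real i * real j \<le> real j * real n" using assms by (metis mult.commute mult_right_mono of_nat_0_le_iff of_nat_le_iff)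
      ultimately show ?thesis by linarith
    qed
    thus ?thesis unfolding u_def t_def using ji assms by (simp add: field_simps)
  qed
  have "t - u \<le> real j / real n"
  proof -
    have "t - u = real j * real (n - i) / (real n * real (n - j))"
      unfolding t_def u_def using ji assms by (simp add: field_simps of_nat_diff)
    also have "\<dots> \<le> real j * real (n - j) / (real n * real (n - j))"
      using ji assms by (intro divide_right_mono mult_left_mono) auto
    also have "\<dots> = real j / real n" using ji by simp
    finally show ?thesis .
  qed
  have "\<bar>b * u - t ^ j * t\<bar> \<le> \<bar>b - t ^ j\<bar> + \<bar>u - t\<bar>"
    by (rule prod_diff_bound) (use u01 t01 in \<open>auto simp: power_le_one\<close>)
  also have "\<dots> \<le> real j ^ 2 / real n + real j / real n"
    using IH \<open>u \<le> t\<close> \<open>t - u \<le> real j / real n\<close> by simp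
  also have "\<dots> \<le> real (Suc j) ^ 2 / real n"
    using assms by (simp add: field_simps power2_eq_square)
  finally show ?case using b1 unfolding t_def by (simp add: mult.commute)
qed


lemma tj_bound:
  assumes "i \<le> n" "0 < n"
  shows "\<bar>(real i / real n) ^ j - (if j \<le> i then real ((n - j) choose (i - j)) / real (n choose i) else 0)\<bar>
          \<le> real j ^ 2 / real n"
proof (cases "j \<le> i")
  case True
  thus ?thesis using beta_bound[OF True assms] by (simp add: abs_minus_commute)
next
  case False
  define t where "t = real i / real n"
  have t01: "0 \<le> t" "t \<le> 1" using assms unfolding t_def by auto
  have "real j \<le> real j * real j" by (cases j) auto
  hence jj: "real j / real n \<le> real j ^ 2 / real n" using assms
    by (intro divide_right_mono) (auto simp: power2_eq_square)
  have "t ^ j \<le> t ^ 1" using False by (intro power_decreasing t01) auto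
  also have "t \<le> real j / real n" unfolding t_def using False assms by (simp add: divide_right_mono)
  also note jj
  finally show ?thesis using False t01 unfolding t_def by simp
qed

lemma polya_real:
  fixes g :: "real poly"
  assumes pos: "\<And>x. 0 \<le> x \<Longrightarrow> x \<le> 1 \<Longrightarrow> poly g x > 0"
  shows "\<exists>N. \<forall>n\<ge>N. \<forall>i\<le>n. bc g n i > 0"
proof -
  have "\<exists>x\<in>{0..1::real}. \<forall>y\<in>{0..1}. poly g x \<le> poly g y"
    by (rule continuous_attains_inf) (auto intro!: continuous_intros)
  then obtain x0 where x0: "x0 \<in> {0..1}" "\<And>y. y \<in> {0..1} \<Longrightarrow> poly g x0 \<le> poly g y" by blast
  define m where "m = poly g x0"
  have m: "m > 0" using x0 pos unfolding m_def by auto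
  have mle: "m \<le> poly g y" if "0 \<le> y" "y \<le> 1" for y using x0 that unfolding m_def by auto
  define Cg where "Cg = (\<Sum>j\<le>degree g. \<bar>coeff g j\<bar> * real j ^ 2)"
  define N where "N = degree g + nat \<lceil>Cg / m\<rceil> + 1"
  have "\<forall>n\<ge>N. \<forall>i\<le>n. bc g n i > 0"
  proof (intro allI impI)
    fix n i assume nN: "N \<le> n" and i: "i \<le> n"
    have n0: "0 < n" and dg: "degree g \<le> n" using nN unfolding N_def by auto
    have "Cg / m < real n"
    proof -
      have "Cg / m \<le> real (nat \<lceil>Cg / m\<rceil>)" by linarith
      also have "\<dots> < real n" using nN unfolding N_def by simp
      finally show ?thesis .
    qed
    hence Cgn: "Cg / real n < m" using m n0 by (simp add: field_simps)
    define t where "t = real i / real n"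
    have t01: "0 \<le> t" "t \<le> 1" using i n0 unfolding t_def by auto
    define b where "b j = (if j \<le> i then real ((n - j) choose (i - j)) / real (n choose i) else 0)" for j
    have cpos: "real (n choose i) > 0" using i by simp
    have d: "bc g n i / real (n choose i) = (\<Sum>j\<le>n. coeff g j * b j)"
    proof -
      have "(\<Sum>j\<le>n. coeff g j * b j) = (\<Sum>j\<le>i. coeff g j * b j)"
        by (rule sum.mono_neutral_right) (use i in \<open>auto simp: b_def\<close>)
      also have "\<dots> = (\<Sum>j\<le>i. coeff g j * real ((n - j) choose (i - j)) / real (n choose i))"
        by (rule sum.cong) (auto simp: b_def)
      also have "\<dots> = bc g n i / real (n choose i)"
        unfolding bc_def by (simp add: sum_divide_distrib)
      finally show ?thesis by simp
    qed
    have gt: "poly g t = (\<Sum>j\<le>n. coeff g j * t ^ j)" by (rule poly_as_sum_n[OF dg])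
    have "\<bar>poly g t - bc g n i / real (n choose i)\<bar> = \<bar>\<Sum>j\<le>n. coeff g j * (t ^ j - b j)\<bar>"
      unfolding gt d by (simp add: sum_subtractf algebra_simps)
    also have "\<dots> \<le> (\<Sum>j\<le>n. \<bar>coeff g j * (t ^ j - b j)\<bar>)" by (rule sum_abs)
    also have "\<dots> \<le> (\<Sum>j\<le>n. \<bar>coeff g j\<bar> * (real j ^ 2 / real n))"
    proof (rule sum_mono)
      fix j assume "j \<in> {..n}"
      have "\<bar>t ^ j - b j\<bar> \<le> real j ^ 2 / real n"
        using tj_bound[OF i n0, of j] unfolding t_def b_def .
      thus "\<bar>coeff g j * (t ^ j - b j)\<bar> \<le> \<bar>coeff g j\<bar> * (real j ^ 2 / real n)"
        by (simp only: abs_mult) (rule mult_left_mono, simp_all)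
    qed
    also have "\<dots> = (\<Sum>j\<le>degree g. \<bar>coeff g j\<bar> * (real j ^ 2 / real n))"
      by (rule sum.mono_neutral_right) (use dg in \<open>auto simp: coeff_eq_0\<close>)
    also have "\<dots> = Cg / real n" unfolding Cg_def by (simp add: sum_divide_distrib)
    finally have "\<bar>poly g t - bc g n i / real (n choose i)\<bar> \<le> Cg / real n" .
    moreover have "m \<le> poly g t" using mle t01 by auto
    ultimately have "bc g n i / real (n choose i) > 0" using Cgn by linarith
    thus "bc g n i > 0" using cpos by (simp add: zero_less_divide_iff)
  qed
  thus ?thesis by blast
qed


abbreviation evr :: "rat poly \<Rightarrow> real \<Rightarrow> real" where
  "evr g x \<equiv> poly (map_poly of_rat g) x"

lemma mpr_add: "map_poly (of_rat :: rat \<Rightarrow> real) (p + q) = map_poly of_rat p + map_poly of_rat q"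
  by (rule poly_eqI) (simp add: coeff_map_poly of_rat_add)

lemma mpr_minus: "map_poly (of_rat :: rat \<Rightarrow> real) (- p) = - map_poly of_rat p"
  by (rule poly_eqI) (simp add: coeff_map_poly of_rat_minus)

lemma mpr_diff: "map_poly (of_rat :: rat \<Rightarrow> real) (p - q) = map_poly of_rat p - map_poly of_rat q"
  by (rule poly_eqI) (simp add: coeff_map_poly of_rat_diff)

lemma mpr_mult: "map_poly (of_rat :: rat \<Rightarrow> real) (p * q) = map_poly of_rat p * map_poly of_rat q"
  by (rule poly_eqI) (simp add: coeff_map_poly coeff_mult of_rat_sum of_rat_mult)

lemma mpr_smult: "map_poly (of_rat :: rat \<Rightarrow> real) (Polynomial.smult c p) = Polynomial.smult (of_rat c) (map_poly of_rat p)"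
  by (rule poly_eqI) (simp add: coeff_map_poly of_rat_mult)

lemma mpr_power: "map_poly (of_rat :: rat \<Rightarrow> real) (p ^ k) = map_poly of_rat p ^ k"
  by (induct k) (simp_all add: mpr_mult)

lemma mpr_const: "map_poly (of_rat :: rat \<Rightarrow> real) [:c:] = [:of_rat c:]"
  by (simp add: map_poly_pCons)

lemma mpr_lin: "map_poly (of_rat :: rat \<Rightarrow> real) [:c, d:] = [:of_rat c, of_rat d:]"
  by (simp add: map_poly_pCons)

lemma evr_of_rat: "evr p (of_rat x) = of_rat (poly p x)"
  by (induct p) (simp_all add: map_poly_pCons of_rat_add of_rat_mult)

lemma degree_mpr: "degree (map_poly (of_rat :: rat \<Rightarrow> real) p) = degree p"
  by (rule degree_map_poly) simp

lemma bc_mpr: "bc (map_poly (of_rat :: rat \<Rightarrow> real) g) n i = of_rat (bc g n i)"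
  unfolding bc_def by (simp add: coeff_map_poly of_rat_sum of_rat_mult)

lemma bern_shift:
  fixes x :: real
  shows "x ^ a * (1 - x) ^ b * (\<Sum>i\<le>m. c i * (x ^ i * (1 - x) ^ (m - i))) =
    (\<Sum>i\<le>m+a+b. (if a \<le> i \<and> i - a \<le> m then c (i - a) else 0) * (x ^ i * (1 - x) ^ (m + a + b - i)))"
proof -
  have "(\<Sum>i\<le>m+a+b. (if a \<le> i \<and> i - a \<le> m then c (i - a) else 0) * (x ^ i * (1 - x) ^ (m + a + b - i)))
      = (\<Sum>i\<in>(\<lambda>l. l + a) ` {..m}. c (i - a) * (x ^ i * (1 - x) ^ (m + a + b - i)))"
  proof (rule sum.mono_neutral_cong_right)
    show "\<forall>i\<in>{..m+a+b} - (\<lambda>l. l + a) ` {..m}.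
      (if a \<le> i \<and> i - a \<le> m then c (i - a) else 0) * (x ^ i * (1 - x) ^ (m + a + b - i)) = 0"
    proof
      fix i assume i: "i \<in> {..m+a+b} - (\<lambda>l. l + a) ` {..m}"
      have "\<not> (a \<le> i \<and> i - a \<le> m)"
      proof
        assume "a \<le> i \<and> i - a \<le> m"
        hence "i = (i - a) + a" "i - a \<in> {..m}" by auto
        thus False using i by blast
      qed
      hence "(if a \<le> i \<and> i - a \<le> m then c (i - a) else 0) = 0" by (rule if_not_P)
      thus "(if a \<le> i \<and> i - a \<le> m then c (i - a) else 0) * (x ^ i * (1 - x) ^ (m + a + b - i)) = 0" by simp
    qed
  qed auto
  also have "\<dots> = (\<Sum>l\<le>m. c l * (x ^ (l + a) * (1 - x) ^ (m + a + b - (l + a))))"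
    by (subst sum.reindex) (auto simp: inj_on_def)
  also have "\<dots> = (\<Sum>l\<le>m. x ^ a * (1 - x) ^ b * (c l * (x ^ l * (1 - x) ^ (m - l))))"
  proof (rule sum.cong[OF refl])
    fix l assume "l \<in> {..m}"
    hence "m + a + b - (l + a) = (m - l) + b" by auto
    thus "c l * (x ^ (l + a) * (1 - x) ^ (m + a + b - (l + a))) = x ^ a * (1 - x) ^ b * (c l * (x ^ l * (1 - x) ^ (m - l)))"
      by (simp add: power_add algebra_simps)
  qed
  finally show ?thesis by (simp add: sum_distrib_left)
qed

lemma pos_rep:
  fixes g :: "rat poly"
  assumes pos: "\<And>x::real. 0 < x \<Longrightarrow> x < 1 \<Longrightarrow> evr g x > 0"
  shows "\<exists>N. \<forall>n\<ge>N. \<exists>c. (\<forall>i\<le>n. c i \<ge> 0) \<and>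
           (\<forall>x::real. evr g x = (\<Sum>i\<le>n. of_rat (c i) * (x ^ i * (1 - x) ^ (n - i))))"
proof -
  have "g \<noteq> 0" using pos[of "1/2"] by auto
  obtain g1 where g1: "g = [:- 0, 1:] ^ order 0 g * g1" "\<not> [:- 0, 1:] dvd g1"
    using order_decomp[OF \<open>g \<noteq> 0\<close>] by blast
  define a where "a = order 0 g"
  have "g1 \<noteq> 0" using g1 by auto
  obtain h where h: "g1 = [:- 1, 1:] ^ order 1 g1 * h" "\<not> [:- 1, 1:] dvd h"
    using order_decomp[OF \<open>g1 \<noteq> 0\<close>] by blast
  define b where "b = order 1 g1"
  have g10: "poly g1 0 \<noteq> 0" using g1(2) poly_eq_0_iff_dvd[of g1 0] by simp
  have h1: "poly h 1 \<noteq> 0" using h(2) poly_eq_0_iff_dvd[of h 1] by simp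
  have h0: "poly h 0 \<noteq> 0" using g10 h(1) by (auto simp: b_def[symmetric])
  define h' where "h' = Polynomial.smult ((-1) ^ b) h"
  have evg: "evr g x = x ^ a * (1 - x) ^ b * evr h' x" for x
  proof -
    have "evr g x = x ^ a * ((x - 1) ^ b * evr h x)"
      by (subst g1(1), subst h(1)) (simp add: mpr_mult mpr_power map_poly_pCons a_def b_def)
    also have "(x - 1) ^ b = (-1) ^ b * (1 - x) ^ b"
      by (simp add: power_mult_distrib[symmetric])
    finally show ?thesis unfolding h'_def mpr_smult by (simp add: algebra_simps of_rat_power of_rat_minus)
  qed
  have h'pos: "evr h' x > 0" if "0 < x" "x < 1" for x
  proof -
    have "0 < evr g x" using pos that by auto
    hence "0 < x ^ a * (1 - x) ^ b * evr h' x" using evg by simp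
    moreover have "0 < x ^ a * (1 - x) ^ b" using that by simp
    ultimately show ?thesis by (simp add: zero_less_mult_iff)
  qed
  have h'0: "evr h' 0 \<noteq> 0" "evr h' 1 \<noteq> 0"
    using evr_of_rat[of h' 0] evr_of_rat[of h' 1] h0 h1 unfolding h'_def by auto
  have h'01: "evr h' 0 > 0" "evr h' 1 > 0"
  proof -
    show "evr h' 0 > 0"
    proof (rule ccontr)
      assume "\<not> evr h' 0 > 0"
      hence "evr h' 0 < 0" using h'0 by linarith
      then obtain x where "0 < x" "x < 1/2" "evr h' x = 0"
        using poly_IVT_pos[of 0 "1/2" "map_poly of_rat h'"] h'pos[of "1/2"] by auto
      thus False using h'pos[of x] by auto
    qed
    show "evr h' 1 > 0"
    proof (rule ccontr)
      assume "\<not> evr h' 1 > 0"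
      hence "evr h' 1 < 0" using h'0 by linarith
      then obtain x where "1/2 < x" "x < 1" "evr h' x = 0"
        using poly_IVT_neg[of "1/2" 1 "map_poly of_rat h'"] h'pos[of "1/2"] by auto
      thus False using h'pos[of x] by auto
    qed
  qed
  have "poly (map_poly of_rat h') x > 0" if "0 \<le> x" "x \<le> 1" for x :: real
  proof (cases "x = 0 \<or> x = 1")
    case True thus ?thesis using h'01 by auto
  next
    case False thus ?thesis using h'pos that by auto
  qed
  then obtain N0 where N0: "\<And>n i. n \<ge> N0 \<Longrightarrow> i \<le> n \<Longrightarrow> bc (map_poly (of_rat :: rat \<Rightarrow> real) h') n i > 0"
    using polya_real by blast
  define N where "N = max N0 (degree h') + a + b"
  have "\<forall>n\<ge>N. \<exists>c. (\<forall>i\<le>n. c i \<ge> 0) \<and>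
           (\<forall>x::real. evr g x = (\<Sum>i\<le>n. of_rat (c i) * (x ^ i * (1 - x) ^ (n - i))))"
  proof (intro allI impI)
    fix n assume "N \<le> n"
    define m where "m = n - a - b"
    have m: "m \<ge> N0" "m \<ge> degree h'" "n = m + a + b" using \<open>N \<le> n\<close> unfolding m_def N_def by auto
    define c0 where "c0 i = bc h' m i" for i
    have c0pos: "c0 i > 0" if "i \<le> m" for i
      using N0[OF m(1) that] unfolding c0_def bc_mpr by simp
    define c where "c i = (if a \<le> i \<and> i - a \<le> m then c0 (i - a) else 0)" for i
    have "\<forall>i\<le>n. c i \<ge> 0" unfolding c_def using c0pos by (auto simp: less_imp_le)
    moreover have "evr g x = (\<Sum>i\<le>n. of_rat (c i) * (x ^ i * (1 - x) ^ (n - i)))" for x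
    proof -
      have "evr h' x = (\<Sum>i\<le>m. of_rat (c0 i) * (x ^ i * (1 - x) ^ (m - i)))"
        unfolding c0_def bc_mpr[symmetric] by (rule bern_expand) (use m in \<open>simp add: degree_mpr\<close>)
      hence "evr g x = x ^ a * (1 - x) ^ b * (\<Sum>i\<le>m. of_rat (c0 i) * (x ^ i * (1 - x) ^ (m - i)))"
        using evg by simp
      also have "\<dots> = (\<Sum>i\<le>m+a+b. (if a \<le> i \<and> i - a \<le> m then of_rat (c0 (i - a)) else 0) * (x ^ i * (1 - x) ^ (m + a + b - i)))"
        by (rule bern_shift)
      also have "\<dots> = (\<Sum>i\<le>n. of_rat (c i) * (x ^ i * (1 - x) ^ (n - i)))"
        unfolding m(3) c_def by (intro sum.cong) auto
      finally show ?thesis .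
    qed
    ultimately show "\<exists>c. (\<forall>i\<le>n. c i \<ge> 0) \<and>
           (\<forall>x::real. evr g x = (\<Sum>i\<le>n. of_rat (c i) * (x ^ i * (1 - x) ^ (n - i))))" by blast
  qed
  thus ?thesis by blast
qed


lemma choose_ge: "0 < i \<Longrightarrow> i < m \<Longrightarrow> m \<le> m choose i"
proof (induct m arbitrary: i)
  case 0 thus ?case by simp
next
  case (Suc m)
  show ?case
  proof (cases "i = 1")
    case True thus ?thesis by simp
  next
    case False
    then obtain i' where i': "i = Suc i'" "0 < i'" using Suc.prems by (cases i) auto
    have "m \<le> m choose i'" using Suc.hyps[of i'] i' Suc.prems by simp
    moreover have "0 < m choose Suc i'" using i' Suc.prems by (intro zero_less_binomial) simp
    ultimately show ?thesis unfolding i'(1) using binomial_Suc_Suc[of m i'] by linarith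
  qed
qed

lemma common_denom:
  fixes S :: "rat set"
  assumes "finite S"
  shows "\<exists>M::nat. M > 0 \<and> (\<forall>r\<in>S. \<exists>z::int. of_nat M * r = of_int z)"
  using assms
proof (induct S rule: finite_induct)
  case empty thus ?case by (intro exI[of _ 1]) auto
next
  case (insert r S)
  then obtain M where M: "M > 0" "\<forall>r\<in>S. \<exists>z::int. of_nat M * r = of_int z" by blast
  obtain a b where ab: "quotient_of r = (a, b)" by (cases "quotient_of r")
  have b: "b > 0" using quotient_of_denom_pos[OF ab] .
  have rab: "r = of_int a / of_int b" using quotient_of_div[OF ab] .
  define M' where "M' = M * nat b"
  have "M' > 0" using M b unfolding M'_def by simp
  moreover have "\<exists>z::int. of_nat M' * s = of_int z" if sS: "s \<in> insert r S" for s
  proof (cases "s = r")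
    case True
    have "of_nat M' * s = of_int (int M * a)" unfolding M'_def True rab using b
      by (simp add: of_nat_mult)
    thus ?thesis by blast
  next
    case False
    then obtain z where "of_nat M * s = of_int z" using M sS by auto
    hence "of_nat M' * s = of_int (z * b)" unfolding M'_def using b
      by (simp add: of_nat_mult algebra_simps)
    thus ?thesis by blast
  qed
  ultimately show ?case by blast
qed


lemma evr_const_sign:
  assumes nz: "\<And>x. 0 < x \<Longrightarrow> x < 1 \<Longrightarrow> evr Q x \<noteq> 0"
    and x: "0 < x" "x < 1" and y: "0 < y" "y < 1" and pos: "evr Q x > 0"
  shows "evr Q y > 0"
proof (rule ccontr)
  assume "\<not> evr Q y > 0"
  hence neg: "evr Q y < 0" using nz[OF y] by linarith
  have "x \<noteq> y" using pos neg by auto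
  show False
  proof (cases "x < y")
    case True
    then obtain z where "x < z" "z < y" "evr Q z = 0"
      using poly_IVT_neg[of x y "map_poly of_rat Q"] pos neg by auto
    thus False using nz[of z] x y by auto
  next
    case False
    hence "y < x" using \<open>x \<noteq> y\<close> by auto
    then obtain z where "y < z" "z < x" "evr Q z = 0"
      using poly_IVT_pos[of y x "map_poly of_rat Q"] pos neg by auto
    thus False using nz[of z] x y by auto
  qed
qed

lemma rat_normalize:
  assumes "rational_simulable D f"
  shows "\<exists>P Q. (\<forall>x::real. 0 < x \<and> x < 1 \<longrightarrow> 0 < evr P x \<and> evr P x < evr Q x) \<and>
               (\<forall>p\<in>D. f p = evr P p / evr Q p)"
proof -
  obtain P Q where PQ: "\<And>x::real. 0 < x \<Longrightarrow> x < 1 \<Longrightarrow> evr Q x \<noteq> 0 \<and> 0 < evr P x / evr Q x \<and> evr P x / evr Q x < 1"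
    and fD: "\<forall>p\<in>D. f p = evr P p / evr Q p"
    using assms unfolding rational_simulable_def by blast
  have nz: "\<And>x. 0 < x \<Longrightarrow> x < 1 \<Longrightarrow> evr Q x \<noteq> 0" using PQ by blast
  show ?thesis
  proof (cases "evr Q (1/2) > 0")
    case True
    have "0 < evr P x \<and> evr P x < evr Q x" if "0 < x" "x < 1" for x
    proof -
      have q: "evr Q x > 0" by (rule evr_const_sign[OF nz _ _ that True]) auto
      thus ?thesis using PQ[OF that] by (simp add: field_simps zero_less_divide_iff)
    qed
    thus ?thesis using fD by blast
  next
    case False
    hence neg: "evr (- Q) (1/2) > 0" using nz[of "1/2"] by (simp add: mpr_minus)
    have nz': "\<And>x. 0 < x \<Longrightarrow> x < 1 \<Longrightarrow> evr (- Q) x \<noteq> 0" using nz by (simp add: mpr_minus)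
    have "0 < evr (- P) x \<and> evr (- P) x < evr (- Q) x" if "0 < x" "x < 1" for x
    proof -
      have q: "evr (- Q) x > 0" by (rule evr_const_sign[OF nz' _ _ that neg]) auto
      hence "evr Q x < 0" by (simp add: mpr_minus)
      thus ?thesis using PQ[OF that] by (simp add: mpr_minus field_simps zero_less_divide_iff divide_less_eq)
    qed
    moreover have "\<forall>p\<in>D. f p = evr (- P) p / evr (- Q) p" using fD by (simp add: mpr_minus)
    ultimately show ?thesis by blast
  qed
qed

lemma rat_coeff_nat:
  assumes "of_nat M * r = (of_int z :: rat)" "r \<ge> 0"
  shows "real (nat \<lfloor>of_nat M * r\<rfloor>) = real M * of_rat r"
proof -
  have z: "z \<ge> 0" using assms by (metis of_int_0_le_iff mult_nonneg_nonneg of_nat_0_le_iff)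
  have "real (nat \<lfloor>of_nat M * r\<rfloor>) = real_of_int z" unfolding assms(1) using z by simp
  also have "\<dots> = of_rat (of_int z)" by (simp add: of_rat_of_int_eq)
  also have "\<dots> = real M * of_rat r" unfolding assms(1)[symmetric] by (simp add: of_rat_mult of_rat_of_nat_eq)
  finally show ?thesis .
qed

lemma rat_to_block:
  assumes D: "D \<subseteq> {0<..<1}" and rs: "rational_simulable D f"
  shows "has_block_simulation D f"
proof -
  obtain P Q where PQ: "\<And>x::real. 0 < x \<Longrightarrow> x < 1 \<Longrightarrow> 0 < evr P x \<and> evr P x < evr Q x"
    and fD: "\<And>p. p \<in> D \<Longrightarrow> f p = evr P p / evr Q p"
    using rat_normalize[OF rs] by blast
  define H where "H = Q - P"
  have evH: "evr H x = evr Q x - evr P x" for x unfolding H_def by (simp add: mpr_diff)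
  obtain N1 where N1: "\<And>n. n \<ge> N1 \<Longrightarrow> \<exists>c. (\<forall>i\<le>n. c i \<ge> 0) \<and>
           (\<forall>x::real. evr P x = (\<Sum>i\<le>n. of_rat (c i) * (x ^ i * (1 - x) ^ (n - i))))"
    using pos_rep[of P] PQ by blast
  have Hpos: "\<And>x::real. 0 < x \<Longrightarrow> x < 1 \<Longrightarrow> evr H x > 0" using PQ evH by simp
  obtain N2 where N2: "\<And>n. n \<ge> N2 \<Longrightarrow> \<exists>c. (\<forall>i\<le>n. c i \<ge> 0) \<and>
           (\<forall>x::real. evr H x = (\<Sum>i\<le>n. of_rat (c i) * (x ^ i * (1 - x) ^ (n - i))))"
    using pos_rep[of H, OF Hpos] by blast
  define n where "n = max N1 N2"
  have nN: "n \<ge> N1" "n \<ge> N2" unfolding n_def by simp_all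
  obtain c where c: "\<And>i. i \<le> n \<Longrightarrow> c i \<ge> 0"
    "\<And>x::real. evr P x = (\<Sum>i\<le>n. of_rat (c i) * (x ^ i * (1 - x) ^ (n - i)))"
    using N1[OF nN(1)] by blast
  obtain e where e: "\<And>i. i \<le> n \<Longrightarrow> e i \<ge> 0"
    "\<And>x::real. evr H x = (\<Sum>i\<le>n. of_rat (e i) * (x ^ i * (1 - x) ^ (n - i)))"
    using N2[OF nN(2)] by blast
  obtain M :: nat where M: "M > 0" "\<forall>r\<in>c ` {..n} \<union> e ` {..n}. \<exists>z::int. of_nat M * r = of_int z"
    using common_denom[of "c ` {..n} \<union> e ` {..n}"] by blast
  define \<alpha> where "\<alpha> i = nat \<lfloor>of_nat M * c i\<rfloor>" for i
  define \<beta> where "\<beta> i = nat \<lfloor>of_nat M * e i\<rfloor>" for i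
  have \<alpha>r: "real (\<alpha> i) = real M * of_rat (c i)" if i: "i \<le> n" for i
  proof -
    obtain z where "of_nat M * c i = of_int z" using M(2) i by auto
    thus ?thesis unfolding \<alpha>_def using c(1)[OF i] by (rule rat_coeff_nat)
  qed
  have \<beta>r: "real (\<beta> i) = real M * of_rat (e i)" if i: "i \<le> n" for i
  proof -
    obtain z where "of_nat M * e i = of_int z" using M(2) i by auto
    thus ?thesis unfolding \<beta>_def using e(1)[OF i] by (rule rat_coeff_nat)
  qed
  define B where "B m i x = (x::real) ^ i * (1 - x) ^ (m - i)" for m i x
  have Prep: "real M * evr P x = (\<Sum>i\<le>n. real (\<alpha> i) * B n i x)" for x
    unfolding c(2) sum_distrib_left B_def by (intro sum.cong) (auto simp: \<alpha>r)
  have Hrep: "real M * evr H x = (\<Sum>i\<le>n. real (\<beta> i) * B n i x)" for x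
    unfolding e(2) sum_distrib_left B_def by (intro sum.cong) (auto simp: \<beta>r)
  have Qrep: "real M * evr Q x = (\<Sum>i\<le>n. real (\<alpha> i + \<beta> i) * B n i x)" for x
  proof -
    have "real M * evr Q x = real M * evr P x + real M * evr H x" unfolding evH by (simp add: algebra_simps)
    also have "\<dots> = (\<Sum>i\<le>n. real (\<alpha> i) * B n i x + real (\<beta> i) * B n i x)"
      unfolding Prep Hrep by (rule sum.distrib[symmetric])
    also have "\<dots> = (\<Sum>i\<le>n. real (\<alpha> i + \<beta> i) * B n i x)"
      by (intro sum.cong) (simp_all add: distrib_right)
    finally show ?thesis .
  qed
  define j where "j = (\<Sum>i\<le>n. \<alpha> i + \<beta> i) + 1"
  define k where "k = n + j + j"
  define \<alpha>' where "\<alpha>' i = (if j \<le> i \<and> i - j \<le> n then \<alpha> (i - j) else 0)" for i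
  define \<beta>' where "\<beta>' i = (if j \<le> i \<and> i - j \<le> n then \<beta> (i - j) else 0)" for i
  have j1: "j \<ge> 1" unfolding j_def by simp
  show ?thesis
  proof (rule coeffs_block_sim[of k \<alpha>' \<beta>'])
    show "1 \<le> k" using j1 unfolding k_def by simp
    show "D \<subseteq> {0<..<1}" by (rule D)
    show "\<alpha>' i + \<beta>' i \<le> k choose i" if "i \<le> k" for i
    proof (cases "j \<le> i \<and> i - j \<le> n")
      case True
      have "\<alpha> (i - j) + \<beta> (i - j) \<le> (\<Sum>i\<le>n. \<alpha> i + \<beta> i)"
        by (rule member_le_sum[of "i - j" "{..n}" "\<lambda>i. \<alpha> i + \<beta> i"]) (use True in auto)
      hence "\<alpha> (i - j) + \<beta> (i - j) \<le> j" unfolding j_def by simp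
      also have "j \<le> k" unfolding k_def by simp
      also have "k \<le> k choose i" by (rule choose_ge) (use True j1 in \<open>auto simp: k_def\<close>)
      finally show ?thesis using True unfolding \<alpha>'_def \<beta>'_def by simp
    qed (auto simp: \<alpha>'_def \<beta>'_def)
    show "\<exists>i\<le>k. \<alpha>' i + \<beta>' i > 0"
    proof (rule ccontr)
      assume "\<not> (\<exists>i\<le>k. \<alpha>' i + \<beta>' i > 0)"
      note nn = this
      have z: "\<alpha> i + \<beta> i = 0" if "i \<le> n" for i
      proof -
        have "i + j \<le> k" unfolding k_def using that by simp
        have "\<not> (\<alpha>' (i + j) + \<beta>' (i + j) > 0)"
        proof
          assume "\<alpha>' (i + j) + \<beta>' (i + j) > 0"
          hence "\<exists>i\<le>k. \<alpha>' i + \<beta>' i > 0" using \<open>i + j \<le> k\<close> by (intro exI[of _ "i + j"]) simp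
          thus False using nn by contradiction
        qed
        moreover have "\<alpha>' (i + j) = \<alpha> i" "\<beta>' (i + j) = \<beta> i" using that by (simp_all add: \<alpha>'_def \<beta>'_def)
        ultimately show ?thesis by simp
      qed
      have "real M * evr Q (1/2) = 0" unfolding Qrep using z by simp
      moreover have "real M * evr Q (1/2) > 0" using M PQ[of "1/2"] by simp
      ultimately show False by linarith
    qed
    fix p assume "p \<in> D"
    hence p: "0 < p" "p < 1" using D by auto
    define w where "w = p ^ j * (1 - p) ^ j"
    have w: "w > 0" using p unfolding w_def by simp
    have sA: "(\<Sum>i\<le>k. real (\<alpha>' i) * (p ^ i * (1 - p) ^ (k - i))) = w * (real M * evr P p)"
    proof -
      have "w * (real M * evr P p) = p ^ j * (1 - p) ^ j * (\<Sum>i\<le>n. real (\<alpha> i) * (p ^ i * (1 - p) ^ (n - i)))"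
        unfolding w_def Prep B_def ..
      also have "\<dots> = (\<Sum>i\<le>n+j+j. (if j \<le> i \<and> i - j \<le> n then real (\<alpha> (i - j)) else 0) * (p ^ i * (1 - p) ^ (n + j + j - i)))"
        by (rule bern_shift)
      also have "\<dots> = (\<Sum>i\<le>k. real (\<alpha>' i) * (p ^ i * (1 - p) ^ (k - i)))"
        unfolding k_def \<alpha>'_def by (intro sum.cong) auto
      finally show ?thesis by simp
    qed
    have sQ: "(\<Sum>i\<le>k. real (\<alpha>' i + \<beta>' i) * (p ^ i * (1 - p) ^ (k - i))) = w * (real M * evr Q p)"
    proof -
      have "w * (real M * evr Q p) = p ^ j * (1 - p) ^ j * (\<Sum>i\<le>n. real (\<alpha> i + \<beta> i) * (p ^ i * (1 - p) ^ (n - i)))"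
        unfolding w_def Qrep B_def ..
      also have "\<dots> = (\<Sum>i\<le>n+j+j. (if j \<le> i \<and> i - j \<le> n then real (\<alpha> (i - j) + \<beta> (i - j)) else 0) * (p ^ i * (1 - p) ^ (n + j + j - i)))"
        by (rule bern_shift)
      also have "\<dots> = (\<Sum>i\<le>k. real (\<alpha>' i + \<beta>' i) * (p ^ i * (1 - p) ^ (k - i)))"
        unfolding k_def \<alpha>'_def \<beta>'_def by (intro sum.cong) auto
      finally show ?thesis by simp
    qed
    have "evr Q p > 0" using PQ[OF p] by linarith
    thus "f p = (\<Sum>i\<le>k. real (\<alpha>' i) * (p ^ i * (1 - p) ^ (k - i))) /
        (\<Sum>i\<le>k. real (\<alpha>' i + \<beta>' i) * (p ^ i * (1 - p) ^ (k - i)))"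
      unfolding sA sQ fD[OF \<open>p \<in> D\<close>]
    proof -
      have "w * real M \<noteq> 0" using w M by simp
      hence "(w * real M) * evr P p / ((w * real M) * evr Q p) = evr P p / evr Q p"
        by (rule mult_divide_mult_cancel_left)
      thus "evr P p / evr Q p = w * (real M * evr P p) / (w * (real M * evr Q p))"
        by (simp only: mult.assoc)
    qed
  qed
qed


lemma dstar_Nil[simp]: "dstar d s [] = s"
  by (simp add: dstar_def)

lemma dstar_snoc[simp]: "dstar d s (w @ [b]) = d (dstar d s w) b"
  by (simp add: dstar_def)

lemma dstar_append: "dstar d s (u @ w) = dstar d (dstar d s u) w"
  by (simp add: dstar_def)

lemma block_partial_contra:
  assumes "set us \<subseteq> A'" "set us' \<subseteq> A'" "A' \<subseteq> {w. length w = k}"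
    "length v = k" "v \<notin> A'" "length r < k"
    "concat us' @ r = concat us @ v"
  shows False
  using assms
proof (induct us arbitrary: us')
  case Nil
  show ?case
  proof (cases us')
    case Nil thus ?thesis using Nil.prems by auto
  next
    case (Cons u r')
    have "u \<in> A'" "length u = k" using Nil.prems Cons by auto
    moreover have "u @ (concat r' @ r) = v @ []" using Nil.prems(7) Cons by simp
    ultimately have "u = v" using Nil.prems(4) append_eq_append_conv[of u v "concat r' @ r" "[]"] by simp
    thus ?thesis using \<open>u \<in> A'\<close> Nil.prems by auto
  qed
next
  case (Cons u us1)
  have uA: "u \<in> A'" "length u = k" using Cons.prems by auto
  show ?case
  proof (cases us')
    case Nil
    hence "r = u @ concat us1 @ v" using Cons.prems(7) by simp
    hence "length r \<ge> k" using uA by simp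
    thus ?thesis using Cons.prems by simp
  next
    case (Cons u' r')
    have u'A: "u' \<in> A'" "length u' = k" using Cons.prems Cons by auto
    have "u' @ (concat r' @ r) = u @ (concat us1 @ v)" using Cons.prems(7) Cons by simp
    hence "concat r' @ r = concat us1 @ v" using uA u'A by (simp add: append_eq_append_conv)
    thus ?thesis using Cons.hyps[of r'] Cons.prems Cons by auto
  qed
qed

locale block_aut =
  fixes k :: nat and A0 A1 :: "bool list set"
  assumes k: "k \<ge> 1" and A0: "A0 \<subseteq> {w. length w = k}" and A1: "A1 \<subseteq> {w. length w = k}"
    and A01: "A0 \<inter> A1 = {}"
begin

definition "Ap = {w. length w = k} - (A0 \<union> A1)"

definition st :: "bool list \<Rightarrow> nat" where "st w = to_nat w + 2"

definition outb :: "bool list \<Rightarrow> nat" where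
  "outb w = (if w \<in> A0 then 0 else if w \<in> A1 then 1 else st [])"

definition dl :: "nat \<Rightarrow> bool \<Rightarrow> nat" where
  "dl n b = (if n < 2 then n else (let w = from_nat (n - 2) @ [b] in if k \<le> length w then outb w else st w))"

lemma st_ge: "st w \<ge> 2" by (simp add: st_def)

lemma st_inj: "st u = st w \<Longrightarrow> u = w" by (simp add: st_def)

lemma dl_st: "dl (st r) b = (if k \<le> length (r @ [b]) then outb (r @ [b]) else st (r @ [b]))"
  by (simp add: dl_def st_def Let_def)

lemma dl_abs: "n < 2 \<Longrightarrow> dl n b = n" by (simp add: dl_def)

lemma outb_abs: "v \<in> A0 \<union> A1 \<Longrightarrow> outb v < 2"
  by (auto simp: outb_def)

lemma char:
  "(\<exists>us r. x = concat us @ r \<and> set us \<subseteq> Ap \<and> length r < k \<and> dstar dl (st []) x = st r) \<or>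
   (\<exists>us v z. x = concat us @ v @ z \<and> set us \<subseteq> Ap \<and> v \<in> A0 \<union> A1 \<and>
      dstar dl (st []) (concat us @ v) = outb v \<and> dstar dl (st []) x = outb v)"
proof (induct x rule: rev_induct)
  case Nil
  show ?case using k by (intro disjI1 exI[of _ "[]"]) auto
next
  case (snoc b x)
  from snoc show ?case
  proof
    assume "\<exists>us r. x = concat us @ r \<and> set us \<subseteq> Ap \<and> length r < k \<and> dstar dl (st []) x = st r"
    then obtain us r where ur: "x = concat us @ r" "set us \<subseteq> Ap" "length r < k" "dstar dl (st []) x = st r"
      by blast
    have "dstar dl (st []) (x @ [b]) = dl (dstar dl (st []) x) b" by (rule dstar_snoc)
    hence ds: "dstar dl (st []) (x @ [b]) = (if k \<le> length (r @ [b]) then outb (r @ [b]) else st (r @ [b]))"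
      using ur(4) dl_st by simp
    show ?thesis
    proof (cases "k \<le> length (r @ [b])")
      case False
      thus ?thesis using ur ds by (intro disjI1 exI[of _ us] exI[of _ "r @ [b]"]) auto
    next
      case True
      hence len: "length (r @ [b]) = k" using ur by simp
      show ?thesis
      proof (cases "r @ [b] \<in> A0 \<union> A1")
        case True
        thus ?thesis using ur ds len
          by (intro disjI2 exI[of _ us] exI[of _ "r @ [b]"] exI[of _ "[]"]) auto
      next
        case False
        hence "r @ [b] \<in> Ap" "outb (r @ [b]) = st []" using len by (auto simp: Ap_def outb_def)
        thus ?thesis using ur ds len
          by (intro disjI1 exI[of _ "us @ [r @ [b]]"] exI[of _ "[]"]) (use k in auto)
      qed
    qed
  next
    assume "\<exists>us v z. x = concat us @ v @ z \<and> set us \<subseteq> Ap \<and> v \<in> A0 \<union> A1 \<and>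
      dstar dl (st []) (concat us @ v) = outb v \<and> dstar dl (st []) x = outb v"
    then obtain us v z where uvz: "x = concat us @ v @ z" "set us \<subseteq> Ap" "v \<in> A0 \<union> A1"
      "dstar dl (st []) (concat us @ v) = outb v" "dstar dl (st []) x = outb v" by blast
    have "dstar dl (st []) (x @ [b]) = dl (dstar dl (st []) x) b" by (rule dstar_snoc)
    hence "dstar dl (st []) (x @ [b]) = outb v" using uvz(5) outb_abs[OF uvz(3)] by (simp add: dl_abs)
    thus ?thesis using uvz by (intro disjI2 exI[of _ us] exI[of _ v] exI[of _ "z @ [b]"]) auto
  qed
qed

lemma Ap_sub: "Ap \<subseteq> {w. length w = k}" by (auto simp: Ap_def)

lemma lang_eq:
  assumes "c \<in> {0, 1}" and Ac: "Ac = (if c = 0 then A0 else A1)"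
  shows "aut_lang dl (st []) {0} {1} {c} = block_lang Ap Ac"
proof
  have Ac_sub: "Ac \<subseteq> A0 \<union> A1" using Ac by auto
  have outAc: "v \<in> A0 \<union> A1 \<Longrightarrow> outb v = c \<longleftrightarrow> v \<in> Ac" for v
    using assms A01 by (auto simp: outb_def)
  show "aut_lang dl (st []) {0} {1} {c} \<subseteq> block_lang Ap Ac"
  proof
    fix x assume x: "x \<in> aut_lang dl (st []) {0} {1} {c}"
    hence xs: "dstar dl (st []) x = c" and pre: "\<And>w' z. x = w' @ z \<Longrightarrow> z \<noteq> [] \<Longrightarrow> dstar dl (st []) w' \<notin> {0, 1}"
      unfolding aut_lang_def by auto
    from char[of x] show "x \<in> block_lang Ap Ac"
    proof
      assume "\<exists>us r. x = concat us @ r \<and> set us \<subseteq> Ap \<and> length r < k \<and> dstar dl (st []) x = st r"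
      then obtain r where "dstar dl (st []) x = st r" by blast
      thus ?thesis using xs st_ge[of r] assms(1) by auto
    next
      assume "\<exists>us v z. x = concat us @ v @ z \<and> set us \<subseteq> Ap \<and> v \<in> A0 \<union> A1 \<and>
        dstar dl (st []) (concat us @ v) = outb v \<and> dstar dl (st []) x = outb v"
      then obtain us v z where uvz: "x = concat us @ v @ z" "set us \<subseteq> Ap" "v \<in> A0 \<union> A1"
        "dstar dl (st []) (concat us @ v) = outb v" "dstar dl (st []) x = outb v" by blast
      have "z = []"
      proof (rule ccontr)
        assume "z \<noteq> []"
        hence "dstar dl (st []) (concat us @ v) \<notin> {0, 1}" using pre[of "concat us @ v" z] uvz by simp
        thus False using uvz outb_abs[OF uvz(3)] by auto
      qed
      hence "v \<in> Ac" using uvz xs outAc by auto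
      thus ?thesis using uvz \<open>z = []\<close> unfolding block_lang_def by auto
    qed
  qed
  show "block_lang Ap Ac \<subseteq> aut_lang dl (st []) {0} {1} {c}"
  proof
    fix x assume "x \<in> block_lang Ap Ac"
    then obtain us v where uv: "x = concat us @ v" "set us \<subseteq> Ap" "v \<in> Ac" unfolding block_lang_def by blast
    have vA: "v \<in> A0 \<union> A1" "length v = k" "v \<notin> Ap" using uv Ac_sub A0 A1 by (auto simp: Ap_def)
    have state: "dstar dl (st []) x = c"
    proof -
      from char[of x] show ?thesis
      proof
        assume "\<exists>us r. x = concat us @ r \<and> set us \<subseteq> Ap \<and> length r < k \<and> dstar dl (st []) x = st r"
        then obtain us' r where "x = concat us' @ r" "set us' \<subseteq> Ap" "length r < k" by blast
        thus ?thesis using block_partial_contra[of us Ap us' k v r] uv vA Ap_sub by auto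
      next
        assume "\<exists>us v z. x = concat us @ v @ z \<and> set us \<subseteq> Ap \<and> v \<in> A0 \<union> A1 \<and>
          dstar dl (st []) (concat us @ v) = outb v \<and> dstar dl (st []) x = outb v"
        then obtain us' v' z where uvz: "x = concat us' @ v' @ z" "set us' \<subseteq> Ap" "v' \<in> A0 \<union> A1"
          "dstar dl (st []) x = outb v'" by blast
        have "length v' = k" "v' \<notin> Ap" using uvz A0 A1 by (auto simp: Ap_def)
        hence "us' = us \<and> v' = v \<and> z = []"
          using block_unique[of us' Ap us k v' v z] uvz uv vA Ap_sub by auto
        thus ?thesis using uvz outAc vA uv by auto
      qed
    qed
    have "dstar dl (st []) w' \<notin> {0, 1}" if "x = w' @ z" "z \<noteq> []" for w' z
    proof
      assume w'abs: "dstar dl (st []) w' \<in> {0, 1}"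
      from char[of w'] show False
      proof
        assume "\<exists>us r. w' = concat us @ r \<and> set us \<subseteq> Ap \<and> length r < k \<and> dstar dl (st []) w' = st r"
        then obtain r where "dstar dl (st []) w' = st r" by blast
        thus False using w'abs st_ge[of r] by auto
      next
        assume "\<exists>us v z. w' = concat us @ v @ z \<and> set us \<subseteq> Ap \<and> v \<in> A0 \<union> A1 \<and>
          dstar dl (st []) (concat us @ v) = outb v \<and> dstar dl (st []) w' = outb v"
        then obtain us' v' z' where uvz: "w' = concat us' @ v' @ z'" "set us' \<subseteq> Ap" "v' \<in> A0 \<union> A1" by blast
        have "length v' = k" "v' \<notin> Ap" using uvz A0 A1 by (auto simp: Ap_def)
        moreover have "concat us' @ v' @ (z' @ z) = concat us @ v" using uvz that uv by simp
        ultimately have "z' @ z = []"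
          using block_unique[of us' Ap us k v' v "z' @ z"] uvz uv vA Ap_sub by auto
        thus False using that by simp
      qed
    qed
    thus "x \<in> aut_lang dl (st []) {0} {1} {c}" unfolding aut_lang_def using state by auto
  qed
qed

definition "Sset = {0, 1} \<union> st ` {w. length w < k}"

lemma is_aut: "is_automaton Sset (st []) dl {0} {1}"
  unfolding is_automaton_def
proof (intro conjI ballI allI)
  have "finite {w::bool list. set w \<subseteq> UNIV \<and> length w \<le> k}" by (rule finite_lists_length_le) simp
  hence "finite {w::bool list. length w < k}" by (rule finite_subset[rotated]) auto
  thus "finite Sset" unfolding Sset_def by simp
  show "st [] \<in> Sset" unfolding Sset_def using k by auto
  fix s b assume "s \<in> Sset"
  then consider "s < 2" | r where "s = st r" "length r < k" unfolding Sset_def by auto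
  thus "dl s b \<in> Sset"
  proof cases
    case 1 thus ?thesis using \<open>s \<in> Sset\<close> by (simp add: dl_abs)
  next
    case 2
    show ?thesis unfolding 2 dl_st using 2 k by (auto simp: Sset_def outb_def)
  qed
qed (auto simp: Sset_def dl_abs)

end

lemma block_to_aut:
  assumes "has_block_simulation D f"
  shows "automaton_simulable D f"
proof -
  obtain k A0 A1 where kA: "k \<ge> 1" "A0 \<subseteq> {w. length w = k}" "A1 \<subseteq> {w. length w = k}" "A0 \<inter> A1 = {}"
    and sim: "is_simulation D f (block_lang ({w. length w = k} - (A0 \<union> A1)) A0) (block_lang ({w. length w = k} - (A0 \<union> A1)) A1)"
    using assms unfolding has_block_simulation_def Let_def by blast
  interpret block_aut k A0 A1 using kA by unfold_locales auto
  have "aut_lang dl (st []) {0} {1} {0} = block_lang Ap A0" by (rule lang_eq) auto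
  moreover have "aut_lang dl (st []) {0} {1} {1} = block_lang Ap A1" by (rule lang_eq) auto
  ultimately have "is_simulation D f (aut_lang dl (st []) {0} {1} {0}) (aut_lang dl (st []) {0} {1} {1})"
    using sim unfolding Ap_def by simp
  thus ?thesis unfolding automaton_simulable_def using is_aut by blast
qed


lemma dstar_Cons[simp]: "dstar d s (b # w) = dstar d (d s b) w"
  by (simp add: dstar_def)

locale aut =
  fixes S :: "nat set" and s0 :: nat and \<delta> :: "nat \<Rightarrow> bool \<Rightarrow> nat" and S0 S1 :: "nat set"
  assumes aut: "is_automaton S s0 \<delta> S0 S1"
begin

abbreviation "T \<equiv> S0 \<union> S1"
abbreviation "Lang s X \<equiv> aut_lang \<delta> s S0 S1 X"

lemma finS: "finite S" and s0S: "s0 \<in> S" and clos: "s \<in> S \<Longrightarrow> \<delta> s b \<in> S"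
  and S0S: "S0 \<subseteq> S" and S1S: "S1 \<subseteq> S" and S01: "S0 \<inter> S1 = {}"
  and abs0: "s \<in> S0 \<Longrightarrow> \<delta> s b = s" and abs1: "s \<in> S1 \<Longrightarrow> \<delta> s b = s"
  using aut unfolding is_automaton_def by blast+

lemma dstar_abs: "s \<in> T \<Longrightarrow> dstar \<delta> s w = s"
  by (induct w) (auto simp: abs0 abs1)

lemma dstar_in: "s \<in> S \<Longrightarrow> dstar \<delta> s w \<in> S"
  by (induct w arbitrary: s) (auto simp: clos)

lemma Lang_pf: "X \<subseteq> T \<Longrightarrow> prefix_free (Lang s X)"
  unfolding prefix_free_def aut_lang_def by blast

lemma Lang_pf2: "prefix_free (Lang s S0 \<union> Lang s S1)"
  unfolding prefix_free_def aut_lang_def by blast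

lemma Lang_in: "s \<in> X \<Longrightarrow> X \<subseteq> T \<Longrightarrow> Lang s X = {[]}"
proof
  assume sX: "s \<in> X" "X \<subseteq> T"
  show "Lang s X \<subseteq> {[]}"
  proof
    fix w assume w: "w \<in> Lang s X"
    show "w \<in> {[]}"
    proof (rule ccontr)
      assume "w \<notin> {[]}"
      hence "w = [] @ w" "w \<noteq> []" by auto
      hence "dstar \<delta> s [] \<notin> T" using w unfolding aut_lang_def by blast
      thus False using sX by auto
    qed
  qed
  show "{[]} \<subseteq> Lang s X" using sX unfolding aut_lang_def by auto
qed

lemma Lang_out: "s \<in> T \<Longrightarrow> s \<notin> X \<Longrightarrow> Lang s X = {}"
proof (rule ccontr)
  assume s: "s \<in> T" "s \<notin> X" and "Lang s X \<noteq> {}"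
  then obtain w where w: "w \<in> Lang s X" by blast
  show False
  proof (cases "w = []")
    case True thus False using w s unfolding aut_lang_def by auto
  next
    case False
    hence "dstar \<delta> s [] \<notin> T" using w unfolding aut_lang_def by fastforce
    thus False using s by auto
  qed
qed

lemma Lang_Cons:
  assumes "s \<notin> T" "X \<subseteq> T"
  shows "Lang s X = Cons True ` Lang (\<delta> s True) X \<union> Cons False ` Lang (\<delta> s False) X"
proof
  show "Lang s X \<subseteq> Cons True ` Lang (\<delta> s True) X \<union> Cons False ` Lang (\<delta> s False) X"
  proof
    fix w assume w: "w \<in> Lang s X"
    have "w \<noteq> []" using w assms unfolding aut_lang_def by auto
    then obtain b w' where bw: "w = b # w'" by (cases w) auto
    have "w' \<in> Lang (\<delta> s b) X"
      unfolding aut_lang_def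
    proof (intro CollectI conjI allI impI)
      show "dstar \<delta> (\<delta> s b) w' \<in> X" using w bw unfolding aut_lang_def by auto
      fix v z assume "w' = v @ z \<and> z \<noteq> []"
      hence "w = (b # v) @ z" "z \<noteq> []" using bw by auto
      hence "dstar \<delta> s (b # v) \<notin> T" using w unfolding aut_lang_def by blast
      thus "dstar \<delta> (\<delta> s b) v \<notin> T" by simp
    qed
    thus "w \<in> Cons True ` Lang (\<delta> s True) X \<union> Cons False ` Lang (\<delta> s False) X"
      using bw by (cases b) auto
  qed
  show "Cons True ` Lang (\<delta> s True) X \<union> Cons False ` Lang (\<delta> s False) X \<subseteq> Lang s X"
  proof
    fix w assume "w \<in> Cons True ` Lang (\<delta> s True) X \<union> Cons False ` Lang (\<delta> s False) X"
    then obtain b w' where bw: "w = b # w'" "w' \<in> Lang (\<delta> s b) X" by blast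
    show "w \<in> Lang s X"
      unfolding aut_lang_def
    proof (intro CollectI conjI allI impI)
      show "dstar \<delta> s w \<in> X" using bw unfolding aut_lang_def by auto
      fix v z assume vz: "w = v @ z \<and> z \<noteq> []"
      show "dstar \<delta> s v \<notin> T"
      proof (cases v)
        case Nil thus ?thesis using assms by simp
      next
        case (Cons c v')
        hence "c = b" "w' = v' @ z" using vz bw by auto
        hence "dstar \<delta> (\<delta> s b) v' \<notin> T" using bw(2) vz unfolding aut_lang_def by blast
        thus ?thesis using Cons \<open>c = b\<close> by simp
      qed
    qed
  qed
qed

definition xs :: "real \<Rightarrow> nat \<Rightarrow> real" where "xs p s = infsum (Pw p) (Lang s S1)"

lemma xs_has_sum:
  assumes "0 \<le> p" "p \<le> 1"
  shows "(Pw p has_sum xs p s) (Lang s S1)"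
proof -
  obtain v where "(Pw p has_sum v) (Lang s S1)"
    using prefix_free_has_sum[OF assms Lang_pf[of S1 s]] by auto
  thus ?thesis unfolding xs_def by (simp add: has_sum_iff)
qed

lemma has_sum_Cons_image:
  assumes "(Pw p has_sum v) L"
  shows "(Pw p has_sum ((if b then p else 1 - p) * v)) (Cons b ` L)"
proof -
  have "inj_on (Cons b) L" by auto
  moreover have "(Pw p \<circ> Cons b) = (\<lambda>w. (if b then p else 1 - p) * Pw p w)" by (auto simp: fun_eq_iff)
  ultimately show ?thesis using has_sum_reindex has_sum_cmult_right[OF assms] by metis
qed

lemma xs_eq:
  assumes "0 \<le> p" "p \<le> 1" "s \<notin> T"
  shows "xs p s = p * xs p (\<delta> s True) + (1 - p) * xs p (\<delta> s False)"
proof -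
  have "(Pw p has_sum (p * xs p (\<delta> s True) + (1 - p) * xs p (\<delta> s False)))
      (Cons True ` Lang (\<delta> s True) S1 \<union> Cons False ` Lang (\<delta> s False) S1)"
    by (rule has_sum_Un_disjoint)
       (use has_sum_Cons_image[OF xs_has_sum[OF assms(1,2)], where b = True]
            has_sum_Cons_image[OF xs_has_sum[OF assms(1,2)], where b = False] in auto)
  hence "(Pw p has_sum (p * xs p (\<delta> s True) + (1 - p) * xs p (\<delta> s False))) (Lang s S1)"
    using Lang_Cons[OF assms(3), of S1] by simp
  thus ?thesis using xs_has_sum[OF assms(1,2), of s] has_sum_unique by blast
qed

lemma xs_S1: "s \<in> S1 \<Longrightarrow> xs p s = 1"
  unfolding xs_def using Lang_in[of s S1] by simp

lemma xs_S0: "s \<in> S0 \<Longrightarrow> xs p s = 0"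
proof -
  assume "s \<in> S0"
  hence "s \<notin> S1" using S01 by blast
  hence "Lang s S1 = {}" using Lang_out[of s S1] \<open>s \<in> S0\<close> by blast
  thus ?thesis unfolding xs_def by simp
qed

end


lemma max_principle:
  fixes I :: "'i set" and M :: "'i \<Rightarrow> 'i \<Rightarrow> real" and y :: "'i \<Rightarrow> real"
  assumes fin: "finite I"
    and nonneg: "\<And>i j. i \<in> I \<Longrightarrow> j \<in> I \<Longrightarrow> M i j \<ge> 0"
    and rows: "\<And>i. i \<in> I \<Longrightarrow> (\<Sum>j\<in>I. M i j) \<le> 1"
    and reach: "\<And>i. i \<in> I \<Longrightarrow> \<exists>j. (\<lambda>a b. a \<in> I \<and> b \<in> I \<and> M a b > 0)\<^sup>*\<^sup>* i j \<and> j \<in> I \<and> (\<Sum>l\<in>I. M j l) < 1"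
    and eq: "\<And>i. i \<in> I \<Longrightarrow> y i = (\<Sum>j\<in>I. M i j * y j)"
    and i: "i \<in> I"
  shows "y i \<le> 0"
proof (rule ccontr)
  assume "\<not> y i \<le> 0"
  define m where "m = Max (y ` I)"
  have ym: "y j \<le> m" if "j \<in> I" for j unfolding m_def using fin that by auto
  have "m \<in> y ` I" unfolding m_def using fin i by (intro Max_in) auto
  then obtain i0 where i0: "i0 \<in> I" "y i0 = m" by auto
  have mpos: "m > 0" using ym[OF i] \<open>\<not> y i \<le> 0\<close> by simp
  have stp: "(\<Sum>l\<in>I. M a l) = 1 \<and> (\<forall>b\<in>I. M a b > 0 \<longrightarrow> y b = m)" if a: "a \<in> I" "y a = m" for a
  proof -
    have "m = (\<Sum>j\<in>I. M a j * y j)" using eq[OF a(1)] a(2) by simp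
    also have "\<dots> \<le> (\<Sum>j\<in>I. M a j * m)" by (intro sum_mono mult_left_mono ym nonneg a(1)) auto
    also have "\<dots> = m * (\<Sum>j\<in>I. M a j)" by (simp add: sum_distrib_left mult.commute)
    also have "\<dots> \<le> m" using rows[OF a(1)] mpos by (simp add: mult_le_cancel_left1)
    finally have e1: "(\<Sum>j\<in>I. M a j * y j) = (\<Sum>j\<in>I. M a j * m)" and e2: "m * (\<Sum>j\<in>I. M a j) = m"
      using \<open>m = (\<Sum>j\<in>I. M a j * y j)\<close> \<open>(\<Sum>j\<in>I. M a j * y j) \<le> (\<Sum>j\<in>I. M a j * m)\<close>
        \<open>m * (\<Sum>j\<in>I. M a j) \<le> m\<close> \<open>(\<Sum>j\<in>I. M a j * m) = m * (\<Sum>j\<in>I. M a j)\<close> by linarith+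
    have "(\<Sum>j\<in>I. M a j) = 1" using e2 mpos by simp
    moreover have "(\<Sum>j\<in>I. M a j * (m - y j)) = 0" using e1 by (simp add: algebra_simps sum_subtractf)
    hence "\<forall>j\<in>I. M a j * (m - y j) = 0"
      by (subst (asm) sum_nonneg_eq_0_iff) (use fin nonneg a ym in auto)
    hence "\<forall>b\<in>I. M a b > 0 \<longrightarrow> y b = m" by auto
    ultimately show ?thesis by blast
  qed
  obtain j where j: "(\<lambda>a b. a \<in> I \<and> b \<in> I \<and> M a b > 0)\<^sup>*\<^sup>* i0 j" "j \<in> I" "(\<Sum>l\<in>I. M j l) < 1"
    using reach[OF i0(1)] by blast
  have "y j = m" using j(1)
  proof (induct rule: rtranclp_induct)
    case base thus ?case using i0 by simp
  next
    case (step a b) thus ?case using stp[of a] by auto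
  qed
  thus False using stp[OF j(2)] j(3) by simp
qed

lemma max_principle_zero:
  fixes I :: "'i set" and M :: "'i \<Rightarrow> 'i \<Rightarrow> real" and y :: "'i \<Rightarrow> real"
  assumes fin: "finite I"
    and nonneg: "\<And>i j. i \<in> I \<Longrightarrow> j \<in> I \<Longrightarrow> M i j \<ge> 0"
    and rows: "\<And>i. i \<in> I \<Longrightarrow> (\<Sum>j\<in>I. M i j) \<le> 1"
    and reach: "\<And>i. i \<in> I \<Longrightarrow> \<exists>j. (\<lambda>a b. a \<in> I \<and> b \<in> I \<and> M a b > 0)\<^sup>*\<^sup>* i j \<and> j \<in> I \<and> (\<Sum>l\<in>I. M j l) < 1"
    and eq: "\<And>i. i \<in> I \<Longrightarrow> y i = (\<Sum>j\<in>I. M i j * y j)"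
    and i: "i \<in> I"
  shows "y i = 0"
proof -
  have "y i \<le> 0" by (rule max_principle[OF fin nonneg rows reach eq i])
  moreover have eq': "- y i = (\<Sum>j\<in>I. M i j * - y j)" if "i \<in> I" for i
  proof -
    have "(\<Sum>j\<in>I. M i j * - y j) = - (\<Sum>j\<in>I. M i j * y j)" by (simp add: sum_negf[symmetric])
    thus ?thesis using eq[OF that] by simp
  qed
  have "- y i \<le> 0"
    by (rule max_principle[where y = "\<lambda>i. - y i", OF fin nonneg rows reach eq' i])
  ultimately show ?thesis by simp
qed

context aut begin

definition "Rset = {dstar \<delta> s0 u | u. True} - T"

lemma Rset_sub: "Rset \<subseteq> S" unfolding Rset_def using dstar_in s0S by auto

lemma finR: "finite Rset" using finite_subset[OF Rset_sub finS] .

lemma R_clos: "s \<in> Rset \<Longrightarrow> \<delta> s b \<in> Rset \<or> \<delta> s b \<in> T"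
proof -
  assume "s \<in> Rset"
  then obtain u where "s = dstar \<delta> s0 u" unfolding Rset_def by auto
  hence "\<delta> s b = dstar \<delta> s0 (u @ [b])" by simp
  hence "\<delta> s b \<in> {dstar \<delta> s0 u | u. True}" by blast
  thus ?thesis unfolding Rset_def by blast
qed

lemma halting:
  assumes p: "0 < p" "p < 1" and hs: "(Pw p has_sum 1) (Lang s0 S0 \<union> Lang s0 S1)"
    and s: "s \<in> Rset"
  shows "\<exists>w. dstar \<delta> s w \<in> T"
proof (rule ccontr)
  assume nh: "\<not> (\<exists>w. dstar \<delta> s w \<in> T)"
  obtain u where u: "s = dstar \<delta> s0 u" using s unfolding Rset_def by auto
  have sT: "s \<notin> T" using s unfolding Rset_def by auto
  define L where "L = Lang s0 S0 \<union> Lang s0 S1"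
  have LT: "w \<in> L \<Longrightarrow> dstar \<delta> s0 w \<in> T" for w unfolding L_def aut_lang_def by auto
  have uL: "u \<notin> L" using LT sT u by auto
  have pf: "prefix_free (insert u L)"
    unfolding prefix_free_def
  proof (intro ballI allI impI)
    fix a b z assume a: "a \<in> insert u L" and b: "b \<in> insert u L" and bz: "b = a @ z"
    show "z = []"
    proof (cases "a = u")
      case True
      show ?thesis
      proof (cases "b = u")
        case True thus ?thesis using bz \<open>a = u\<close> by simp
      next
        case False
        hence "b \<in> L" using b by auto
        hence "dstar \<delta> s0 b \<in> T" by (rule LT)
        moreover have "dstar \<delta> s0 b = dstar \<delta> s z" using bz True u by (simp add: dstar_append)
        ultimately show ?thesis using nh by auto
      qed
    next
      case False
      hence aL: "a \<in> L" using a by auto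
      show ?thesis
      proof (cases "b = u")
        case True
        have "dstar \<delta> s0 a \<in> T" using aL by (rule LT)
        hence "dstar \<delta> s0 u \<in> T" using bz True by (simp add: dstar_append dstar_abs)
        thus ?thesis using sT u by simp
      next
        case False
        hence "b \<in> L" using b by auto
        thus ?thesis using Lang_pf2 aL bz unfolding L_def prefix_free_def by blast
      qed
    qed
  qed
  have "(Pw p has_sum (Pw p u + 1)) (insert u L)"
    by (rule has_sum_insert[OF uL]) (use hs in \<open>simp add: L_def\<close>)
  moreover obtain v where "(Pw p has_sum v) (insert u L)" "v \<le> 1"
    using prefix_free_has_sum[OF _ _ pf, of p] p by auto
  ultimately have "Pw p u + 1 \<le> 1" using has_sum_unique by blast
  thus False using Pw_pos[OF p, of u] by simp
qed

end


lemma sum_sel: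
  assumes "distinct rs"
  shows "(\<Sum>j<length rs. if t = rs ! j then G (rs ! j) else 0) = (if t \<in> set rs then G t else (0::'a::comm_monoid_add))"
proof (cases "t \<in> set rs")
  case True
  then obtain j0 where j0: "j0 < length rs" "rs ! j0 = t" by (auto simp: in_set_conv_nth)
  have "(\<Sum>j<length rs. if t = rs ! j then G (rs ! j) else 0) = (\<Sum>j<length rs. if j = j0 then G t else 0)"
  proof (rule sum.cong[OF refl])
    fix j assume "j \<in> {..<length rs}"
    hence "t = rs ! j \<longleftrightarrow> j = j0" using j0 assms nth_eq_iff_index_eq by fastforce
    thus "(if t = rs ! j then G (rs ! j) else 0) = (if j = j0 then G t else 0)" by auto
  qed
  also have "\<dots> = G t" using j0 by simp
  finally show ?thesis using True by simp
next
  case False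
  hence "\<And>j. j < length rs \<Longrightarrow> t \<noteq> rs ! j" by auto
  thus ?thesis using False by simp
qed

context aut begin

definition "rs = sorted_list_of_set Rset"
definition "nR = length rs"

lemma rs_dist: "distinct rs" and rs_set: "set rs = Rset"
  unfolding rs_def using finR by auto

lemma rs_in: "i < nR \<Longrightarrow> rs ! i \<in> Rset"
  using rs_set nth_mem unfolding nR_def by blast

lemma R_T: "s \<in> Rset \<Longrightarrow> s \<notin> T" unfolding Rset_def by auto

definition Mr :: "real \<Rightarrow> nat \<Rightarrow> nat \<Rightarrow> real" where
  "Mr p i j = p * (if \<delta> (rs ! i) True = rs ! j then 1 else 0) + (1 - p) * (if \<delta> (rs ! i) False = rs ! j then 1 else 0)"

definition Br :: "real \<Rightarrow> nat \<Rightarrow> real" where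
  "Br p i = p * (if \<delta> (rs ! i) True \<in> S1 then 1 else 0) + (1 - p) * (if \<delta> (rs ! i) False \<in> S1 then 1 else 0)"

lemma row_sum:
  "(\<Sum>j<nR. Mr p i j * G (rs ! j)) =
     p * (if \<delta> (rs ! i) True \<in> Rset then G (\<delta> (rs ! i) True) else 0) +
     (1 - p) * (if \<delta> (rs ! i) False \<in> Rset then G (\<delta> (rs ! i) False) else 0)"
proof -
  have "(\<Sum>j<nR. Mr p i j * G (rs ! j)) =
     p * (\<Sum>j<length rs. if \<delta> (rs ! i) True = rs ! j then G (rs ! j) else 0) +
     (1 - p) * (\<Sum>j<length rs. if \<delta> (rs ! i) False = rs ! j then G (rs ! j) else 0)"
  proof -
    have "Mr p i j * G (rs ! j) = p * (if \<delta> (rs ! i) True = rs ! j then G (rs ! j) else 0) +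
       (1 - p) * (if \<delta> (rs ! i) False = rs ! j then G (rs ! j) else 0)" for j
      unfolding Mr_def by (auto simp: algebra_simps)
    thus ?thesis unfolding nR_def by (simp add: sum.distrib sum_distrib_left)
  qed
  also have "\<dots> = p * (if \<delta> (rs ! i) True \<in> Rset then G (\<delta> (rs ! i) True) else 0) +
     (1 - p) * (if \<delta> (rs ! i) False \<in> Rset then G (\<delta> (rs ! i) False) else 0)"
    unfolding sum_sel[OF rs_dist] rs_set ..
  finally show ?thesis .
qed

lemma row_sum1:
  "(\<Sum>j<nR. Mr p i j) =
     p * (if \<delta> (rs ! i) True \<in> Rset then 1 else 0) + (1 - p) * (if \<delta> (rs ! i) False \<in> Rset then 1 else 0)"
  using row_sum[of p i "\<lambda>_. 1"] by simp

definition Am :: "rat poly mat" where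
  "Am = mat nR nR (\<lambda>(i,j). (if i = j then 1 else 0) -
     ((if \<delta> (rs ! i) True = rs ! j then [:0,1:] else 0) + (if \<delta> (rs ! i) False = rs ! j then [:1,-1:] else 0)))"

definition bv :: "rat poly vec" where
  "bv = vec nR (\<lambda>i. (if \<delta> (rs ! i) True \<in> S1 then [:0,1:] else 0) + (if \<delta> (rs ! i) False \<in> S1 then [:1,-1:] else 0))"

definition "Areal p = mat nR nR (\<lambda>(i,j). (if i = j then 1 else 0) - Mr p i j)"

lemma evr_basic: "evr 0 x = 0" "evr 1 x = 1" "evr [:0,1:] x = x" "evr [:1,-1:] x = 1 - x"
  by (simp_all add: map_poly_pCons)

lemma evr_pCons: "evr (pCons a q) x = of_rat a + x * evr q x" by (simp add: map_poly_pCons)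
lemma evr_add': "evr (a + b) x = evr a x + evr b x" by (simp add: mpr_add)
lemma evr_diff': "evr (a - b) x = evr a x - evr b x" by (simp add: mpr_diff)
lemma evr_mult': "evr (a * b) x = evr a x * evr b x" by (simp add: mpr_mult)

lemma Am_eval: "map_mat (\<lambda>q. evr q p) Am = Areal p"
  unfolding Am_def Areal_def Mr_def
  by (rule eq_matI) (auto simp: evr_add' evr_diff' evr_pCons)

lemma bv_eval: "map_vec (\<lambda>q. evr q p) bv = vec nR (Br p)"
  unfolding bv_def Br_def
  by (rule eq_vecI) (auto simp: evr_add' evr_pCons)

lemma Am_carrier: "Am \<in> carrier_mat nR nR" unfolding Am_def by simp
lemma Areal_carrier: "Areal p \<in> carrier_mat nR nR" unfolding Areal_def by simp

lemma Areal_mult: "i < nR \<Longrightarrow> dim_vec v = nR \<Longrightarrow> (Areal p *\<^sub>v v) $ i = v $ i - (\<Sum>j<nR. Mr p i j * v $ j)"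
proof -
  assume i: "i < nR" and v: "dim_vec v = nR"
  have "(Areal p *\<^sub>v v) $ i = (\<Sum>j\<in>{0..<nR}. ((if i = j then 1 else 0) - Mr p i j) * v $ j)"
    using i v unfolding Areal_def by (simp add: scalar_prod_def)
  also have "\<dots> = (\<Sum>j<nR. (if i = j then v $ j else 0)) - (\<Sum>j<nR. Mr p i j * v $ j)"
  proof -
    have "((if i = j then 1 else 0) - Mr p i j) * v $ j = (if i = j then v $ j else 0) - Mr p i j * v $ j" for j
      by (simp add: left_diff_distrib)
    thus ?thesis by (simp add: atLeast0LessThan sum_subtractf)
  qed
  also have "(\<Sum>j<nR. (if i = j then v $ j else 0)) = v $ i" using i by simp
  finally show ?thesis .
qed

end


context aut begin

lemma Mr_nonneg: "0 \<le> p \<Longrightarrow> p \<le> 1 \<Longrightarrow> Mr p i j \<ge> 0"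
  unfolding Mr_def by simp

lemma rows_le: "0 \<le> p \<Longrightarrow> p \<le> 1 \<Longrightarrow> (\<Sum>j<nR. Mr p i j) \<le> 1"
  unfolding row_sum1 by auto

lemma reach_leaky:
  assumes p: "0 < p" "p < 1" and halt: "\<forall>s\<in>Rset. \<exists>w. dstar \<delta> s w \<in> T" and i: "i < nR"
  shows "\<exists>j. (\<lambda>a b. a \<in> {..<nR} \<and> b \<in> {..<nR} \<and> Mr p a b > 0)\<^sup>*\<^sup>* i j \<and> j \<in> {..<nR} \<and> (\<Sum>l\<in>{..<nR}. Mr p j l) < 1"
proof -
  obtain w where w: "dstar \<delta> (rs ! i) w \<in> T" using halt rs_in[OF i] by blast
  have "\<forall>i<nR. dstar \<delta> (rs ! i) w \<in> T \<longrightarrow>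
    (\<exists>j. (\<lambda>a b. a \<in> {..<nR} \<and> b \<in> {..<nR} \<and> Mr p a b > 0)\<^sup>*\<^sup>* i j \<and> j \<in> {..<nR} \<and> (\<Sum>l\<in>{..<nR}. Mr p j l) < 1)"
  proof (induct w)
    case Nil thus ?case using rs_in R_T by auto
  next
    case (Cons b w)
    show ?case
    proof (intro allI impI)
      fix i assume i: "i < nR" and wT: "dstar \<delta> (rs ! i) (b # w) \<in> T"
      show "\<exists>j. (\<lambda>a b. a \<in> {..<nR} \<and> b \<in> {..<nR} \<and> Mr p a b > 0)\<^sup>*\<^sup>* i j \<and> j \<in> {..<nR} \<and> (\<Sum>l\<in>{..<nR}. Mr p j l) < 1"
      proof (cases "\<delta> (rs ! i) b \<in> Rset")
        case False
        have "(\<Sum>l<nR. Mr p i l) < 1" unfolding row_sum1 using False p by (cases b) auto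
        thus ?thesis using i by blast
      next
        case True
        then obtain i' where i': "i' < nR" "rs ! i' = \<delta> (rs ! i) b"
          using rs_set by (metis in_set_conv_nth nR_def)
        have "Mr p i i' > 0" unfolding Mr_def using i' p by (cases b) (auto simp: add_pos_nonneg add_nonneg_pos)
        moreover have "dstar \<delta> (rs ! i') w \<in> T" using wT i' by simp
        then obtain j where j: "(\<lambda>a b. a \<in> {..<nR} \<and> b \<in> {..<nR} \<and> Mr p a b > 0)\<^sup>*\<^sup>* i' j" "j \<in> {..<nR}" "(\<Sum>l\<in>{..<nR}. Mr p j l) < 1"
          using Cons i' by blast
        ultimately have "(\<lambda>a b. a \<in> {..<nR} \<and> b \<in> {..<nR} \<and> Mr p a b > 0)\<^sup>*\<^sup>* i j"
          using i i' by (intro converse_rtranclp_into_rtranclp[OF _ j(1)]) simp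
        thus ?thesis using j by blast
      qed
    qed
  qed
  thus ?thesis using i w by blast
qed

lemma det_nz:
  assumes p: "0 < p" "p < 1" and halt: "\<forall>s\<in>Rset. \<exists>w. dstar \<delta> s w \<in> T"
  shows "det (Areal p) \<noteq> 0"
proof
  assume "det (Areal p) = 0"
  then obtain v where v: "v \<in> carrier_vec nR" "v \<noteq> 0\<^sub>v nR" "Areal p *\<^sub>v v = 0\<^sub>v nR"
    using det_0_iff_vec_prod_zero_field[OF Areal_carrier] by blast
  have dv: "dim_vec v = nR" using v by auto
  have eq: "v $ i = (\<Sum>j\<in>{..<nR}. Mr p i j * v $ j)" if "i \<in> {..<nR}" for i
  proof -
    have "(Areal p *\<^sub>v v) $ i = 0" using v(3) that by simp
    thus ?thesis using Areal_mult[of i v p] that dv by simp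
  qed
  have "v $ i = 0" if "i < nR" for i
    by (rule max_principle_zero[where M = "Mr p" and I = "{..<nR}" and y = "\<lambda>j. v $ j"])
       (use Mr_nonneg rows_le reach_leaky[OF p halt] eq p that in auto)
  hence "v = 0\<^sub>v nR" using dv by (intro eq_vecI) auto
  thus False using v by simp
qed

lemma sol:
  assumes p: "0 \<le> p" "p \<le> 1"
  shows "Areal p *\<^sub>v vec nR (\<lambda>i. xs p (rs ! i)) = vec nR (Br p)"
proof (rule eq_vecI)
  fix i assume "i < dim_vec (vec nR (Br p))"
  hence i: "i < nR" by simp
  have key: "c * xs p t - c * (if t \<in> Rset then xs p t else 0) = c * (if t \<in> S1 then 1 else 0)"
    if "t \<in> Rset \<or> t \<in> T" for c t
  proof (cases "t \<in> Rset")
    case True thus ?thesis using R_T by auto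
  next
    case False
    thus ?thesis using that xs_S0 xs_S1 S01 by auto
  qed
  have "(Areal p *\<^sub>v vec nR (\<lambda>i. xs p (rs ! i))) $ i = xs p (rs ! i) - (\<Sum>j<nR. Mr p i j * xs p (rs ! j))"
    using Areal_mult[of i "vec nR (\<lambda>i. xs p (rs ! i))" p] i by simp
  also have "(\<Sum>j<nR. Mr p i j * xs p (rs ! j)) =
     p * (if \<delta> (rs ! i) True \<in> Rset then xs p (\<delta> (rs ! i) True) else 0) +
     (1 - p) * (if \<delta> (rs ! i) False \<in> Rset then xs p (\<delta> (rs ! i) False) else 0)"
    by (rule row_sum)
  also have "xs p (rs ! i) = p * xs p (\<delta> (rs ! i) True) + (1 - p) * xs p (\<delta> (rs ! i) False)"
    using xs_eq[OF p R_T[OF rs_in[OF i]]] .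
  also have "p * xs p (\<delta> (rs ! i) True) + (1 - p) * xs p (\<delta> (rs ! i) False) -
     (p * (if \<delta> (rs ! i) True \<in> Rset then xs p (\<delta> (rs ! i) True) else 0) +
     (1 - p) * (if \<delta> (rs ! i) False \<in> Rset then xs p (\<delta> (rs ! i) False) else 0)) = Br p i"
  proof -
    define X1 where "X1 = xs p (\<delta> (rs ! i) True)"
    define X0 where "X0 = xs p (\<delta> (rs ! i) False)"
    define I1 where "I1 = (if \<delta> (rs ! i) True \<in> Rset then xs p (\<delta> (rs ! i) True) else 0)"
    define I0 where "I0 = (if \<delta> (rs ! i) False \<in> Rset then xs p (\<delta> (rs ! i) False) else 0)"
    have k1: "p * X1 - p * I1 = p * (if \<delta> (rs ! i) True \<in> S1 then 1 else 0)"
      unfolding X1_def I1_def by (rule key) (use R_clos[OF rs_in[OF i]] in blast)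
    have k0: "(1 - p) * X0 - (1 - p) * I0 = (1 - p) * (if \<delta> (rs ! i) False \<in> S1 then 1 else 0)"
      unfolding X0_def I0_def by (rule key) (use R_clos[OF rs_in[OF i]] in blast)
    have "p * X1 + (1 - p) * X0 - (p * I1 + (1 - p) * I0) = (p * X1 - p * I1) + ((1 - p) * X0 - (1 - p) * I0)"
      by simp
    also have "\<dots> = Br p i" unfolding k1 k0 Br_def ..
    finally show ?thesis unfolding X1_def X0_def I1_def I0_def .
  qed
  finally show "(Areal p *\<^sub>v vec nR (\<lambda>i. xs p (rs ! i))) $ i = vec nR (Br p) $ i" using i by simp
next
  show "dim_vec (Areal p *\<^sub>v vec nR (\<lambda>i. xs p (rs ! i))) = dim_vec (vec nR (Br p))"
    by (simp add: Areal_def)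
qed

end


lemma evr_hom: "comm_ring_hom (\<lambda>q. evr q x)"
  by unfold_locales (simp_all add: mpr_add mpr_mult)

lemma map_replace_col:
  "dim_vec b = dim_row A \<Longrightarrow> map_mat h (replace_col A b k) = replace_col (map_mat h A) (map_vec h b) k"
  unfolding replace_col_def by (rule eq_matI) auto

context aut begin

lemma aut_rat:
  assumes sim: "is_simulation D f (Lang s0 S0) (Lang s0 S1)" and D: "D \<noteq> {}" "D \<subseteq> {0<..<1}"
    and fD: "\<forall>p\<in>D. 0 < f p \<and> f p < 1"
  shows "rational_simulable D f"
proof -
  obtain p0 where p0: "p0 \<in> D" using D by blast
  have p0i: "0 < p0" "p0 < 1" using p0 D by auto
  have hs0: "(Pw p0 has_sum 1) (Lang s0 S0 \<union> Lang s0 S1)" and hs1: "(Pw p0 has_sum f p0) (Lang s0 S1)"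
    and disj: "Lang s0 S0 \<inter> Lang s0 S1 = {}"
    using sim p0 unfolding is_simulation_def by auto
  have L1ne: "Lang s0 S1 \<noteq> {}"
  proof
    assume "Lang s0 S1 = {}"
    hence "(Pw p0 has_sum f p0) {}" using hs1 by simp
    hence "f p0 = 0" using has_sum_unique[OF _ has_sum_empty] by blast
    thus False using fD p0 by auto
  qed
  have L0ne: "Lang s0 S0 \<noteq> {}"
  proof
    assume "Lang s0 S0 = {}"
    hence "(Pw p0 has_sum 1) (Lang s0 S1)" using hs0 by simp
    hence "f p0 = 1" using has_sum_unique[OF hs1] by blast
    thus False using fD p0 by auto
  qed
  have s0T: "s0 \<notin> T"
  proof
    assume "s0 \<in> T"
    show False
    proof (cases "s0 \<in> S1")
      case True
      hence "s0 \<notin> S0" using S01 by blast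
      thus False using Lang_out[of s0 S0] \<open>s0 \<in> T\<close> L0ne by blast
    next
      case False
      thus False using Lang_out[of s0 S1] \<open>s0 \<in> T\<close> L1ne by blast
    qed
  qed
  have "s0 = dstar \<delta> s0 []" by simp
  hence s0R: "s0 \<in> Rset" unfolding Rset_def using s0T by blast
  have halt: "\<forall>s\<in>Rset. \<exists>w. dstar \<delta> s w \<in> T" using halting[OF p0i hs0] by blast
  obtain k0 where k0: "k0 < nR" "rs ! k0 = s0"
    using s0R rs_set by (metis in_set_conv_nth nR_def)
  define Q where "Q = det Am"
  define P where "P = det (replace_col Am bv k0)"
  have evQ: "evr Q x = det (Areal x)" for x
    unfolding Q_def using comm_ring_hom.hom_det[OF evr_hom, of x Am] Am_eval[of x] by simp
  have evP: "evr P x = det (replace_col (Areal x) (vec nR (Br x)) k0)" for x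
  proof -
    have "dim_vec bv = dim_row Am" unfolding bv_def Am_def by simp
    hence "map_mat (\<lambda>q. evr q x) (replace_col Am bv k0) =
        replace_col (map_mat (\<lambda>q. evr q x) Am) (map_vec (\<lambda>q. evr q x) bv) k0"
      by (rule map_replace_col)
    also have "\<dots> = replace_col (Areal x) (vec nR (Br x)) k0" by (simp only: Am_eval bv_eval)
    finally have "map_mat (\<lambda>q. evr q x) (replace_col Am bv k0) = replace_col (Areal x) (vec nR (Br x)) k0" .
    thus ?thesis unfolding P_def using comm_ring_hom.hom_det[OF evr_hom, of x "replace_col Am bv k0"] by simp
  qed
  have cr: "evr P x = xs x s0 * evr Q x" if "0 < x" "x < 1" for x
  proof -
    have "det (replace_col (Areal x) (Areal x *\<^sub>v vec nR (\<lambda>i. xs x (rs ! i))) k0) =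
        vec nR (\<lambda>i. xs x (rs ! i)) $ k0 * det (Areal x)"
      by (rule cramer_lemma_mat[OF Areal_carrier _ k0(1)]) simp
    moreover have "Areal x *\<^sub>v vec nR (\<lambda>i. xs x (rs ! i)) = vec nR (Br x)"
      by (rule sol) (use that in auto)
    ultimately have "det (replace_col (Areal x) (vec nR (Br x)) k0) = xs x (rs ! k0) * det (Areal x)"
      using k0 by simp
    thus ?thesis unfolding evP evQ using k0 by simp
  qed
  have Qnz: "evr Q x \<noteq> 0" if "0 < x" "x < 1" for x
    unfolding evQ using det_nz[OF that halt] .
  have xpos: "0 < xs x s0 \<and> xs x s0 < 1" if x: "0 < x" "x < 1" for x
  proof -
    obtain w1 where w1: "w1 \<in> Lang s0 S1" using L1ne by blast
    obtain w0 where w0: "w0 \<in> Lang s0 S0" using L0ne by blast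
    have hx1: "(Pw x has_sum xs x s0) (Lang s0 S1)" using xs_has_sum x by simp
    have "sum (Pw x) {w1} \<le> xs x s0"
      by (rule finite_sum_le_has_sum[OF hx1]) (use w1 Pw_nonneg x in auto)
    hence g1: "Pw x w1 \<le> xs x s0" by simp
    obtain v0 where hv0: "(Pw x has_sum v0) (Lang s0 S0)"
      using prefix_free_has_sum[of x "Lang s0 S0"] Lang_pf[of S0 s0] x by auto
    have "sum (Pw x) {w0} \<le> v0"
      by (rule finite_sum_le_has_sum[OF hv0]) (use w0 Pw_nonneg x in auto)
    hence g0: "Pw x w0 \<le> v0" by simp
    have hu: "(Pw x has_sum (v0 + xs x s0)) (Lang s0 S0 \<union> Lang s0 S1)"
      by (rule has_sum_Un_disjoint[OF hv0 hx1 disj])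
    obtain v where "(Pw x has_sum v) (Lang s0 S0 \<union> Lang s0 S1)" "v \<le> 1"
      using prefix_free_has_sum[of x "Lang s0 S0 \<union> Lang s0 S1"] Lang_pf2 x by auto
    hence "v0 + xs x s0 \<le> 1" using hu has_sum_unique by blast
    thus ?thesis using g0 g1 Pw_pos[OF x, of w0] Pw_pos[OF x, of w1] by linarith
  qed
  have part1: "\<forall>x::real. 0 < x \<and> x < 1 \<longrightarrow> evr Q x \<noteq> 0 \<and> 0 < evr P x / evr Q x \<and> evr P x / evr Q x < 1"
  proof (intro allI impI)
    fix x :: real assume "0 < x \<and> x < 1"
    hence x: "0 < x" "x < 1" by auto
    have "evr P x / evr Q x = xs x s0" using cr[OF x] Qnz[OF x] by simp
    thus "evr Q x \<noteq> 0 \<and> 0 < evr P x / evr Q x \<and> evr P x / evr Q x < 1"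
      using Qnz[OF x] xpos[OF x] by auto
  qed
  have part2: "\<forall>p\<in>D. f p = evr P p / evr Q p"
  proof
    fix p assume p: "p \<in> D"
    hence pi: "0 < p" "p < 1" using D by auto
    have "(Pw p has_sum f p) (Lang s0 S1)" using sim p unfolding is_simulation_def by auto
    moreover have "(Pw p has_sum xs p s0) (Lang s0 S1)" by (rule xs_has_sum) (use pi in auto)
    ultimately have "f p = xs p s0" by (rule has_sum_unique)
    thus "f p = evr P p / evr Q p" using cr[OF pi] Qnz[OF pi] by simp
  qed
  show ?thesis unfolding rational_simulable_def using part1 part2 by blast
qed

end

theorem theorem2p2:
  fixes D :: "real set" and f :: "real \<Rightarrow> real"
  assumes "D \<noteq> {}" and "D \<subseteq> {0<..<1}"
    and "\<forall>p\<in>D. 0 < f p \<and> f p < 1"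
  shows "(has_block_simulation D f \<longleftrightarrow> automaton_simulable D f) \<and>
         (automaton_simulable D f \<longleftrightarrow> rational_simulable D f)"
proof -
  have ar: "rational_simulable D f" if asim: "automaton_simulable D f"
  proof -
    obtain S s0 \<delta> S0 S1 where a: "is_automaton S s0 \<delta> S0 S1"
      and sim: "is_simulation D f (aut_lang \<delta> s0 S0 S1 S0) (aut_lang \<delta> s0 S0 S1 S1)"
      using asim unfolding automaton_simulable_def by blast
    interpret aut S s0 \<delta> S0 S1 by (rule aut.intro[OF a])
    show ?thesis by (rule aut_rat[OF sim assms])
  qed
  have rb: "has_block_simulation D f" if "rational_simulable D f"
    by (rule rat_to_block[OF assms(2) that])
  have ba: "automaton_simulable D f" if "has_block_simulation D f"
    by (rule block_to_aut[OF that])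
  show ?thesis using ar rb ba by blast
qed


end
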